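(* For any interval $\mathcal{I}\subseteq[-1/2,1/2)$ and any $f\in\mathbb{F}_q[X]$ of degree $d$ with $p\nmid d$, \[N_{\mathcal{I}}(f,\psi)=(d-1)|\mathcal{I}|+O\left(\frac{d}{\log d}\right),\] where the implied constant depends at most on $q$.
   Context: $p$ odd prime, $q$ a power of $p$; $\mathrm{tr}_n:\mathbb{F}_{q^n}\to\mathbb{F}_p$ absolute trace; $\psi$ a fixed nontrivial additive character of $\mathbb{F}_p$; $S_n(f,\psi)=\sum_{x\in\mathbb{F}_{q^n}}\psi(\mathrm{tr}_nf(x))$; $L(u,f,\psi)=\exp(\sum_{n\ge1}S_n(f,\psi)u^n/n)=\prod_{j=1}^{d-1}(1-\sqrt q e^{2\pi i\theta_j(f,\psi)}u)$ with $\theta_j(f,\psi)\in[-1/2,1/2)$. $N_{\mathcal{I}}(f,\psi)=\#\{1\le j\le d-1:\theta_j(f,\psi)\in\mathcal{I}\}$, and $|\mathcal{I}|$ is the length of $\mathcal{I}$. *)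

theory Defs
  imports "HOL-Analysis.Analysis" "HOL-Computational_Algebra.Computational_Algebra"
begin

text \<open>Ambient field: an algebraically closed field 'k of characteristic p. Inside it,
  F_{q^n} is the set of roots of X^{q^n} - X, and F_p = F_{p^1}.\<close>

definition alg_closed_field :: "'k::field itself \<Rightarrow> bool" where
  "alg_closed_field _ \<longleftrightarrow> (\<forall>P :: 'k poly. degree P > 0 \<longrightarrow> (\<exists>x. poly P x = 0))"

definition finite_subfield :: "nat \<Rightarrow> 'k::field set" where
  "finite_subfield m = {x. x ^ m = x}"

definition abs_trace :: "nat \<Rightarrow> nat \<Rightarrow> nat \<Rightarrow> 'k::field \<Rightarrow> 'k" where
  "abs_trace p e n y = (\<Sum>i<n * e. y ^ (p ^ i))"

definition nontriv_add_char :: "nat \<Rightarrow> ('k::field \<Rightarrow> complex) \<Rightarrow> bool" where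
  "nontriv_add_char p \<psi> \<longleftrightarrow>
     (\<forall>x\<in>finite_subfield p. \<forall>y\<in>finite_subfield p. \<psi> (x + y) = \<psi> x * \<psi> y)
     \<and> (\<exists>x\<in>finite_subfield p. \<psi> x \<noteq> 1)"

definition exp_sum :: "nat \<Rightarrow> nat \<Rightarrow> 'k::field poly \<Rightarrow> ('k \<Rightarrow> complex) \<Rightarrow> nat \<Rightarrow> complex" where
  "exp_sum p e f \<psi> n = (\<Sum>x\<in>finite_subfield ((p ^ e) ^ n). \<psi> (abs_trace p e n (poly f x)))"

definition L_fps :: "nat \<Rightarrow> nat \<Rightarrow> 'k::field poly \<Rightarrow> ('k \<Rightarrow> complex) \<Rightarrow> complex fps" where
  "L_fps p e f \<psi> = fps_exp 1 oo Abs_fps (\<lambda>n. if n = 0 then 0 else exp_sum p e f \<psi> n / of_nat n)"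

definition real_interval :: "real set \<Rightarrow> bool" where
  "real_interval I \<longleftrightarrow> (\<forall>x\<in>I. \<forall>z\<in>I. \<forall>y. x \<le> y \<and> y \<le> z \<longrightarrow> y \<in> I)"

definition interval_length :: "real set \<Rightarrow> real" where
  "interval_length I = (if I = {} then 0 else Sup I - Inf I)"

end

theory Submission
  imports Defs
begin


definition ee :: "real \<Rightarrow> complex" where "ee x = cis (2 * pi * x)"

lemma ee_add: "ee (x + y) = ee x * ee y"
  by (simp add: ee_def cis_mult distrib_left)

lemma ee_int: "ee (of_int n) = 1"
  unfolding ee_def by (simp add: Ints_of_int)

lemma ee_zero[simp]: "ee 0 = 1" by (simp add: ee_def)

lemma norm_ee[simp]: "norm (ee x) = 1" by (simp add: ee_def)

lemma cnj_ee: "cnj (ee x) = ee (- x)"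
  by (simp add: ee_def cis_cnj)

lemma ee_power: "ee x ^ n = ee (real n * x)"
  by (simp only: ee_def Complex.DeMoivre) (simp add: mult_ac)

lemma ee_periodic: "ee (x + of_int n) = ee x"
  by (simp add: ee_add ee_int)

definition nd :: "real \<Rightarrow> real" where "nd x = min (frac x) (1 - frac x)"

lemma nd_le: "nd x \<le> \<bar>x - of_int n\<bar>"
proof (cases "n \<le> \<lfloor>x\<rfloor>")
  case True
  then have "frac x \<le> x - of_int n" unfolding frac_def by linarith
  moreover have "frac x \<ge> 0" by simp
  ultimately show ?thesis unfolding nd_def by linarith
next
  case False
  then have "1 - frac x \<le> of_int n - x" unfolding frac_def by linarith
  moreover have "frac x < 1" by (simp add: frac_lt_1)
  ultimately show ?thesis unfolding nd_def by linarith
qed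

lemma nd_ex: "\<exists>n. nd x = \<bar>x - of_int n\<bar>"
proof (cases "frac x \<le> 1 - frac x")
  case True
  then have "nd x = \<bar>x - of_int \<lfloor>x\<rfloor>\<bar>" unfolding nd_def frac_def by simp
  then show ?thesis by blast
next
  case False
  then have "nd x = \<bar>x - of_int (\<lfloor>x\<rfloor> + 1)\<bar>" unfolding nd_def frac_def by simp
  then show ?thesis by blast
qed

lemma nd_nonneg: "nd x \<ge> 0"
  unfolding nd_def using frac_ge_0[of x] frac_lt_1[of x] by simp

lemma nd_le_half: "nd x \<le> 1/2"
  unfolding nd_def by (auto simp: min_def)

lemma nd_le_abs: "nd x \<le> \<bar>x\<bar>"
  using nd_le[of x 0] by simp

lemma nd_minus: "nd (- x) = nd x"
proof -
  obtain n where n: "nd x = \<bar>x - of_int n\<bar>" using nd_ex by blast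
  obtain m where m: "nd (-x) = \<bar>-x - of_int m\<bar>" using nd_ex by blast
  have "nd (-x) \<le> \<bar>-x - of_int (-n)\<bar>" by (rule nd_le)
  moreover have "nd x \<le> \<bar>x - of_int (-m)\<bar>" by (rule nd_le)
  ultimately show ?thesis using n m by simp
qed

lemma nd_periodic: "nd (x + of_int k) = nd x"
proof -
  obtain n where n: "nd x = \<bar>x - of_int n\<bar>" using nd_ex by blast
  obtain m where m: "nd (x + of_int k) = \<bar>x + of_int k - of_int m\<bar>" using nd_ex by blast
  have "nd (x + of_int k) \<le> \<bar>x + of_int k - of_int (n + k)\<bar>" by (rule nd_le)
  moreover have "nd x \<le> \<bar>x - of_int (m - k)\<bar>" by (rule nd_le)
  ultimately show ?thesis using n m by simp
qed

lemma nd_triangle: "nd (x + y) \<le> nd x + nd y"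
proof -
  obtain n where n: "nd x = \<bar>x - of_int n\<bar>" using nd_ex by blast
  obtain m where m: "nd y = \<bar>y - of_int m\<bar>" using nd_ex by blast
  have "nd (x + y) \<le> \<bar>x + y - of_int (n + m)\<bar>" by (rule nd_le)
  then show ?thesis using n m by simp
qed

lemma sin_c1: "\<bar>sin t - (\<Sum>m<3. sin_coeff m * t ^ m)\<bar> \<le> inverse (fact 3) * \<bar>t\<bar> ^ 3"
  by (rule Maclaurin_sin_bound)

lemma sin_c2: "(\<Sum>m<3. sin_coeff m * t ^ m) = (t::real)"
proof -
  have "(\<Sum>m<3. sin_coeff m * t ^ m) = sin_coeff 0 * t^0 + sin_coeff 1 * t^1 + sin_coeff 2 * t^2"
    by (simp add: numeral_3_eq_3 numeral_2_eq_2 power2_eq_square)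
  also have "\<dots> = t" by (simp add: sin_coeff_def)
  finally show ?thesis .
qed

lemma sin_c3: "inverse (fact 3) * \<bar>t\<bar> ^ 3 \<le> \<bar>t\<bar>^3/(6::real)"
proof -
  have a1: "fact 3 = (6::real)" by (simp add: fact_numeral)
  have a3: "inverse (fact 3::real) = 1/6" by (simp only: a1) simp
  show ?thesis by (simp only: a3)
qed

lemma sin_lower: assumes "0 \<le> t" "t \<le> pi / 2" shows "t / 3 \<le> sin t"
proof -
  have "\<bar>sin t - t\<bar> \<le> \<bar>t\<bar>^3/6"
    using sin_c1[of t] sin_c3[of t] unfolding sin_c2 by linarith
  moreover have "\<bar>t\<bar>^3 = t^3" using assms by simp
  ultimately have "\<bar>sin t - t\<bar> \<le> t^3/6" by simp
  then have "t - t^3/6 \<le> sin t" unfolding abs_le_iff by linarith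
  moreover have "t^3/6 \<le> 2*t/3"
  proof -
    have "t \<le> 2" using assms pi_less_4 by linarith
    then have "t^2 \<le> 2^2" using assms by (intro power_mono) auto
    then have "t^2 \<le> 4" by simp
    then have "t * t^2 \<le> t * 4" using assms by (intro mult_left_mono) auto
    then show ?thesis by (simp add: power3_eq_cube power2_eq_square mult_ac)
  qed
  ultimately show ?thesis by linarith
qed

lemma ee_minus_1_lower: "norm (ee x - 1) \<ge> 2 * nd x"
proof -
  obtain n where n: "nd x = \<bar>x - of_int n\<bar>" using nd_ex by blast
  define y where "y = x - of_int n"
  have ey: "ee x = ee y" using ee_periodic[of y n] by (simp add: y_def)
  have y: "\<bar>y\<bar> \<le> 1/2" using n nd_le_half[of x] y_def by simp
  have "(norm (ee y - 1))^2 = (cos (2*pi*y) - 1)^2 + (sin (2*pi*y))^2"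
    by (simp add: ee_def cmod_def cis.code)
  also have "\<dots> = 2 - 2 * cos (2*pi*y)"
    using sin_cos_squared_add[of "2*pi*y"] by (simp add: power2_eq_square algebra_simps)
  also have "\<dots> = 4 * (sin (pi * \<bar>y\<bar>))^2"
  proof -
    have "cos (2 * (pi * \<bar>y\<bar>)) = 1 - 2 * (sin (pi*\<bar>y\<bar>))^2" by (rule cos_double_sin)
    moreover have "cos (2*pi*y) = cos (2 * (pi * \<bar>y\<bar>))"
      by (cases "y \<ge> 0") (auto simp: mult_ac)
    ultimately show ?thesis by simp
  qed
  finally have eq: "(norm (ee y - 1))^2 = (2 * sin (pi * \<bar>y\<bar>))^2" by (simp add: power_mult_distrib)
  have s: "pi * \<bar>y\<bar> / 3 \<le> sin (pi * \<bar>y\<bar>)"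
    using y by (intro sin_lower) auto
  have "pi * \<bar>y\<bar> \<le> pi * 1" using y by (intro mult_left_mono) auto
  then have "0 \<le> sin (pi * \<bar>y\<bar>)" by (intro sin_ge_zero) auto
  then have "norm (ee y - 1) = 2 * sin (pi * \<bar>y\<bar>)" using eq
    by (metis mult_nonneg_nonneg norm_ge_zero power2_eq_imp_eq zero_le_numeral)
  moreover have "3 * \<bar>y\<bar> \<le> pi * \<bar>y\<bar>" using pi_gt3 by (intro mult_right_mono) auto
  then have "2 * \<bar>y\<bar> \<le> 2 * sin (pi * \<bar>y\<bar>)" using s by linarith
  ultimately show ?thesis using ey s n y_def by simp
qed


definition DK :: "nat \<Rightarrow> real \<Rightarrow> complex" where
  "DK K x = (\<Sum>a\<le>K. ee (real a * x))"

definition df :: "nat \<times> nat \<Rightarrow> int" where "df u = int (fst u) - int (snd u)"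

abbreviation P2 :: "nat \<Rightarrow> (nat \<times> nat) set" where "P2 K \<equiv> {..K} \<times> {..K}"

lemma ee_mult_ee_neg: "ee x * ee (- y) = ee (x - y)"
  by (simp add: ee_add[symmetric])

lemma norm_DK_sq:
  "complex_of_real ((cmod (DK K x))^2) = (\<Sum>u\<in>P2 K. ee (of_int (df u) * x))"
proof -
  have "complex_of_real ((cmod (DK K x))^2) = DK K x * cnj (DK K x)"
    by (rule complex_norm_square)
  also have "\<dots> = (\<Sum>a\<le>K. ee (real a * x)) * (\<Sum>c\<le>K. ee (- (real c * x)))"
    by (simp add: DK_def cnj_sum cnj_ee)
  also have "\<dots> = (\<Sum>a\<le>K. \<Sum>c\<le>K. ee (real a * x) * ee (- (real c * x)))"
    by (rule sum_product)
  also have "\<dots> = (\<Sum>u\<in>P2 K. ee (real (fst u) * x) * ee (- (real (snd u) * x)))"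
    unfolding sum.cartesian_product by (simp add: case_prod_beta)
  also have "\<dots> = (\<Sum>u\<in>P2 K. ee (of_int (df u) * x))"
    by (intro sum.cong refl) (simp add: ee_mult_ee_neg df_def left_diff_distrib)
  finally show ?thesis .
qed

lemma norm_DK_4:
  "complex_of_real ((cmod (DK K x))^4) = (\<Sum>w\<in>P2 K \<times> P2 K. ee (of_int (df (fst w) + df (snd w)) * x))"
proof -
  have "(cmod (DK K x))^4 = (cmod (DK K x))^2 * (cmod (DK K x))^2"
    by (simp add: power_add[symmetric])
  then have "complex_of_real ((cmod (DK K x))^4) =
     (\<Sum>u\<in>P2 K. ee (of_int (df u) * x)) * (\<Sum>v\<in>P2 K. ee (of_int (df v) * x))"
    by (simp add: norm_DK_sq[symmetric])
  also have "\<dots> = (\<Sum>u\<in>P2 K. \<Sum>v\<in>P2 K. ee (of_int (df u) * x) * ee (of_int (df v) * x))"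
    by (rule sum_product)
  also have "\<dots> = (\<Sum>w\<in>P2 K \<times> P2 K. ee (of_int (df (fst w)) * x) * ee (of_int (df (snd w)) * x))"
    unfolding sum.cartesian_product by (simp add: case_prod_beta)
  also have "\<dots> = (\<Sum>w\<in>P2 K \<times> P2 K. ee (of_int (df (fst w) + df (snd w)) * x))"
    by (intro sum.cong refl) (simp add: ee_add[symmetric] distrib_right)
  finally show ?thesis .
qed

lemma trig_sum_points:
  fixes s :: "'b \<Rightarrow> int" and \<theta> :: "'a \<Rightarrow> real"
  assumes T: "finite T" and J: "finite J" and sL: "\<forall>\<tau>\<in>T. \<bar>s \<tau>\<bar> \<le> L"
    and Q0: "0 \<le> Q" and PQ: "\<forall>k::int. 1 \<le> k \<and> k \<le> L \<longrightarrow> cmod (\<Sum>j\<in>J. ee (of_int k * \<theta> j)) \<le> Q"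
  shows "cmod ((\<Sum>j\<in>J. \<Sum>\<tau>\<in>T. ee (of_int (s \<tau>) * (\<theta> j - t)))
            - of_nat (card {\<tau>\<in>T. s \<tau> = 0} * card J)) \<le> real (card T) * Q"
proof -
  define P where "P k = (\<Sum>j\<in>J. ee (of_int k * \<theta> j))" for k :: int
  have PQ': "cmod (P k) \<le> Q" if "k \<noteq> 0" "\<bar>k\<bar> \<le> L" for k
  proof (cases "k > 0")
    case True then show ?thesis using PQ that unfolding P_def by auto
  next
    case False
    then have "1 \<le> -k" "-k \<le> L" using that by auto
    then have "cmod (P (-k)) \<le> Q" using PQ unfolding P_def by blast
    moreover have "P k = cnj (P (-k))"
      unfolding P_def by (simp add: cnj_sum cnj_ee)
    ultimately show ?thesis by simp
  qed
  have eq: "(\<Sum>j\<in>J. \<Sum>\<tau>\<in>T. ee (of_int (s \<tau>) * (\<theta> j - t))) =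
        (\<Sum>\<tau>\<in>T. ee (- (of_int (s \<tau>) * t)) * P (s \<tau>))"
    unfolding P_def
    by (subst sum.swap) (simp add: sum_distrib_left ee_add[symmetric] right_diff_distrib)
  define Z where "Z = {\<tau>\<in>T. s \<tau> = 0}"
  have "(\<Sum>\<tau>\<in>T. ee (- (of_int (s \<tau>) * t)) * P (s \<tau>)) =
      (\<Sum>\<tau>\<in>Z. ee (- (of_int (s \<tau>) * t)) * P (s \<tau>)) + (\<Sum>\<tau>\<in>T - Z. ee (- (of_int (s \<tau>) * t)) * P (s \<tau>))"
    using T by (metis (no_types, lifting) Diff_subset Z_def add.commute mem_Collect_eq subsetI sum.subset_diff)
  also have "(\<Sum>\<tau>\<in>Z. ee (- (of_int (s \<tau>) * t)) * P (s \<tau>)) = of_nat (card Z * card J)"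
    by (simp add: Z_def P_def)
  finally have eq2: "(\<Sum>j\<in>J. \<Sum>\<tau>\<in>T. ee (of_int (s \<tau>) * (\<theta> j - t))) - of_nat (card Z * card J)
        = (\<Sum>\<tau>\<in>T - Z. ee (- (of_int (s \<tau>) * t)) * P (s \<tau>))" using eq by simp
  have "cmod (\<Sum>\<tau>\<in>T - Z. ee (- (of_int (s \<tau>) * t)) * P (s \<tau>)) \<le> (\<Sum>\<tau>\<in>T - Z. cmod (ee (- (of_int (s \<tau>) * t)) * P (s \<tau>)))"
    by (rule norm_sum)
  also have "\<dots> \<le> (\<Sum>\<tau>\<in>T - Z. Q)"
    by (intro sum_mono) (auto simp: norm_mult Z_def intro!: PQ' sL[rule_format])
  also have "\<dots> = real (card (T - Z)) * Q" by simp
  also have "\<dots> \<le> real (card T) * Q"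
    using T Q0 by (intro mult_right_mono) (auto intro: card_mono)
  finally show ?thesis using eq2 Z_def by simp
qed


lemma ee_eq_1_int: assumes "ee y = 1" shows "\<exists>n::int. y = of_int n"
proof -
  have "exp (\<i> * complex_of_real (2 * pi * y)) = 1" using assms by (simp add: ee_def cis_conv_exp)
  then obtain n :: int where "Im (\<i> * complex_of_real (2 * pi * y)) = of_int (2 * n) * pi"
    unfolding exp_eq_1 by blast
  then have "2 * pi * y = 2 * pi * of_int n" by simp
  then have "y = of_int n" by simp
  then show ?thesis by blast
qed

lemma grid_sum_one:
  assumes M: "M > 0" and k: "\<bar>k\<bar> < int M"
  shows "(\<Sum>m<M. ee (of_int k * (x - real m / real M))) = (if k = 0 then of_nat M else 0)"
proof (cases "k = 0")
  case True then show ?thesis by simp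
next
  case False
  define w where "w = ee (- (of_int k / real M))"
  have trm: "ee (of_int k * (x - real m / real M)) = ee (of_int k * x) * w ^ m" for m
    unfolding w_def ee_power by (simp add: ee_add[symmetric] right_diff_distrib mult.commute)
  have wM: "w ^ M = 1"
  proof -
    have "w ^ M = ee (real M * (- (of_int k / real M)))" unfolding w_def ee_power ..
    also have "\<dots> = ee (of_int (- k))" using M by simp
    also have "\<dots> = 1" by (rule ee_int)
    finally show ?thesis .
  qed
  have w1: "w \<noteq> 1"
  proof
    assume "w = 1"
    then have "ee (- (of_int k / real M)) = 1" by (simp add: w_def)
    then obtain n :: int where n: "- (of_int k / real M) = of_int n" using ee_eq_1_int by blast
    then have "of_int k = - (of_int n * real M)" using M by (simp add: field_simps)
    then have kn: "k = - n * int M" by (metis mult_minus_left of_int_eq_iff of_int_minus of_int_mult of_int_of_nat_eq)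
    then have "n \<noteq> 0" using False by auto
    then have "1 \<le> \<bar>n\<bar>" by linarith
    then have "1 * int M \<le> \<bar>n\<bar> * int M" by (intro mult_right_mono) auto
    then have "\<bar>k\<bar> \<ge> int M" unfolding kn by (simp add: abs_mult)
    then show False using k by simp
  qed
  have "(\<Sum>m<M. ee (of_int k * (x - real m / real M))) = ee (of_int k * x) * (\<Sum>m<M. w ^ m)"
    by (simp add: trm sum_distrib_left)
  also have "(\<Sum>m<M. w ^ m) = 0" using geometric_sum[OF w1, of M] wM by simp
  finally show ?thesis using False by simp
qed

lemma grid_sum:
  fixes s :: "'b \<Rightarrow> int"
  assumes T: "finite T" and M: "M > 0" and sM: "\<forall>\<tau>\<in>T. \<bar>s \<tau>\<bar> < int M"
  shows "(\<Sum>m<M. \<Sum>\<tau>\<in>T. ee (of_int (s \<tau>) * (x - real m / real M))) = of_nat (M * card {\<tau>\<in>T. s \<tau> = 0})"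
proof -
  have "(\<Sum>m<M. \<Sum>\<tau>\<in>T. ee (of_int (s \<tau>) * (x - real m / real M))) =
        (\<Sum>\<tau>\<in>T. \<Sum>m<M. ee (of_int (s \<tau>) * (x - real m / real M)))"
    by (rule sum.swap)
  also have "\<dots> = (\<Sum>\<tau>\<in>T. if s \<tau> = 0 then of_nat M else 0)"
    using sM by (intro sum.cong refl grid_sum_one[OF M]) auto
  also have "\<dots> = (\<Sum>\<tau>\<in>{\<tau>\<in>T. s \<tau> = 0}. of_nat M)"
    using T by (simp add: sum.If_cases Int_def)
  also have "\<dots> = of_nat (M * card {\<tau>\<in>T. s \<tau> = 0})" by (simp add: mult.commute)
  finally show ?thesis .
qed

lemma DK_Suc: "DK (Suc K) x = DK K x + ee (real (Suc K) * x)"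
  unfolding DK_def by simp

lemma DK_telescope: "DK K x * (ee x - 1) = ee (real (Suc K) * x) - 1"
proof (induction K)
  case 0 then show ?case by (simp add: DK_def)
next
  case (Suc K)
  have "DK (Suc K) x * (ee x - 1) = DK K x * (ee x - 1) + ee (real (Suc K) * x) * (ee x - 1)"
    by (simp add: DK_Suc distrib_right)
  also have "\<dots> = ee (real (Suc (Suc K)) * x) - 1"
    using Suc by (simp add: algebra_simps ee_add[symmetric])
  finally show ?case .
qed

lemma norm_DK_le: "cmod (DK K x) \<le> real K + 1"
proof -
  have "cmod (DK K x) \<le> (\<Sum>a\<le>K. cmod (ee (real a * x)))" unfolding DK_def by (rule norm_sum)
  also have "\<dots> = real K + 1" by simp
  finally show ?thesis .
qed

lemma DK_zero: "DK K 0 = of_nat (K + 1)"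
  unfolding DK_def by simp

lemma DK_bound: assumes "nd x > 0" shows "cmod (DK K x) \<le> 1 / nd x"
proof -
  have "cmod (DK K x) * cmod (ee x - 1) = cmod (ee (real (Suc K) * x) - 1)"
    using DK_telescope[of K x] by (metis norm_mult)
  also have "\<dots> \<le> cmod (ee (real (Suc K) * x)) + cmod (1::complex)" by (rule norm_triangle_ineq4)
  also have "\<dots> = 2" by simp
  finally have a: "cmod (DK K x) * cmod (ee x - 1) \<le> 2" .
  have b: "2 * nd x \<le> cmod (ee x - 1)" by (rule ee_minus_1_lower)
  have "cmod (DK K x) * (2 * nd x) \<le> 2"
    using a b by (meson mult_left_mono norm_ge_zero order_trans)
  then show ?thesis using assms by (simp add: field_simps)
qed

definition FF :: "nat \<Rightarrow> real \<Rightarrow> real" where "FF K x = (cmod (DK K x))^2"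
definition WW :: "nat \<Rightarrow> real \<Rightarrow> real" where "WW K x = (cmod (DK K x))^4"

lemma FF_nonneg: "FF K x \<ge> 0" by (simp add: FF_def)
lemma WW_nonneg: "WW K x \<ge> 0" by (simp add: WW_def)
lemma WW_FF: "WW K x = FF K x * FF K x"
  by (simp add: WW_def FF_def power_add[symmetric])

lemma FF_bound: assumes "nd x > 0" shows "FF K x \<le> 1 / (nd x)^2"
proof -
  have "(cmod (DK K x))^2 \<le> (1 / nd x)^2"
    using DK_bound[OF assms] by (intro power_mono) auto
  then show ?thesis by (simp add: FF_def power_divide)
qed

definition AA :: "nat \<Rightarrow> nat" where
  "AA K = card {w \<in> P2 K \<times> P2 K. df (fst w) + df (snd w) = 0}"

lemma df_bound: "u \<in> P2 K \<Longrightarrow> \<bar>df u\<bar> \<le> int K"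
  by (auto simp: df_def)

lemma WW_grid:
  assumes "M > 2 * K"
  shows "(\<Sum>m<M. WW K (x - real m / real M)) = real M * real (AA K)"
proof -
  have "complex_of_real (\<Sum>m<M. WW K (x - real m / real M)) =
     (\<Sum>m<M. \<Sum>w\<in>P2 K \<times> P2 K. ee (of_int (df (fst w) + df (snd w)) * (x - real m / real M)))"
    by (simp only: WW_def of_real_sum norm_DK_4)
  also have "\<dots> = of_nat (M * AA K)"
    unfolding AA_def
  proof (rule grid_sum)
    show "\<forall>\<tau>\<in>P2 K \<times> P2 K. \<bar>df (fst \<tau>) + df (snd \<tau>)\<bar> < int M"
    proof
      fix \<tau> assume "\<tau> \<in> P2 K \<times> P2 K"
      then have "\<bar>df (fst \<tau>)\<bar> \<le> int K" "\<bar>df (snd \<tau>)\<bar> \<le> int K" using df_bound by auto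
      then show "\<bar>df (fst \<tau>) + df (snd \<tau>)\<bar> < int M" using assms by linarith
    qed
  qed (use assms in auto)
  finally show ?thesis by (metis of_nat_mult of_real_eq_iff of_real_of_nat_eq)
qed

lemma AA_lower: "real (AA K) \<ge> (real K + 1)^3 / 2"
proof -
  define M where "M = 2 * K + 1"
  have M: "M > 2 * K" by (simp add: M_def)
  have "WW K (0 - real 0 / real M) \<le> (\<Sum>m<M. WW K (0 - real m / real M))"
    using M by (intro member_le_sum) (auto simp: WW_nonneg)
  also have "\<dots> = real M * real (AA K)" by (rule WW_grid[OF M])
  moreover have "cmod (DK K 0) = real K + 1" by (simp only: DK_zero norm_of_nat)
  ultimately have a: "(real K + 1)^4 \<le> real M * real (AA K)"
    by (simp add: WW_def)
  have "(real K + 1)^3 * (2 * real K + 1) \<le> (real K + 1)^3 * (2 * (real K + 1))"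
    by (intro mult_left_mono) auto
  then have "(real K + 1)^3 * (2 * real K + 1) / 2 \<le> (real K + 1)^3 * (2 * (real K + 1)) / 2"
    by (rule divide_right_mono) simp
  moreover have "(real K + 1)^3 * (2 * (real K + 1)) / 2 = (real K + 1)^4"
    by (simp add: eval_nat_numeral)
  moreover have "(real K + 1)^3 / 2 * real M = (real K + 1)^3 * (2 * real K + 1) / 2"
    by (simp add: M_def)
  ultimately have "(real K + 1)^3 / 2 * real M \<le> (real K + 1)^4" by linarith
  also note a
  finally have "(real K + 1)^3 / 2 * real M \<le> real (AA K) * real M" by (simp add: mult.commute)
  then show ?thesis using M by (simp add: M_def)
qed


lemma cmod_real_minus_nat: "cmod (complex_of_real r - of_nat n) = \<bar>r - real n\<bar>"
proof -
  have "complex_of_real r - of_nat n = complex_of_real (r - real n)" by simp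
  then show ?thesis by (simp only: norm_of_real)
qed

lemma card_P2: "card (P2 K) = (K + 1)^2"
  by (simp add: card_cartesian_product power2_eq_square)

lemma S4_bound:
  fixes \<theta> :: "'a \<Rightarrow> real"
  assumes J: "finite J" and Q0: "0 \<le> Q"
    and PQ: "\<forall>k::int. 1 \<le> k \<and> k \<le> 2 * int K \<longrightarrow> cmod (\<Sum>j\<in>J. ee (of_int k * \<theta> j)) \<le> Q"
  shows "\<bar>(\<Sum>j\<in>J. WW K (\<theta> j - t)) - real (AA K) * real (card J)\<bar> \<le> (real K + 1)^4 * Q"
proof -
  have "complex_of_real (\<Sum>j\<in>J. WW K (\<theta> j - t)) =
     (\<Sum>j\<in>J. \<Sum>w\<in>P2 K \<times> P2 K. ee (of_int (df (fst w) + df (snd w)) * (\<theta> j - t)))"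
    by (simp only: WW_def of_real_sum norm_DK_4)
  moreover have "cmod ((\<Sum>j\<in>J. \<Sum>w\<in>P2 K \<times> P2 K. ee (of_int (df (fst w) + df (snd w)) * (\<theta> j - t)))
      - of_nat (card {w\<in>P2 K \<times> P2 K. df (fst w) + df (snd w) = 0} * card J))
      \<le> real (card (P2 K \<times> P2 K)) * Q"
  proof (rule trig_sum_points[OF _ J _ Q0 PQ])
    show "\<forall>\<tau>\<in>P2 K \<times> P2 K. \<bar>df (fst \<tau>) + df (snd \<tau>)\<bar> \<le> 2 * int K"
    proof
      fix \<tau> assume "\<tau> \<in> P2 K \<times> P2 K"
      then have "\<bar>df (fst \<tau>)\<bar> \<le> int K" "\<bar>df (snd \<tau>)\<bar> \<le> int K" using df_bound by auto
      then show "\<bar>df (fst \<tau>) + df (snd \<tau>)\<bar> \<le> 2 * int K" by linarith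
    qed
  qed auto
  moreover have "real (card (P2 K \<times> P2 K)) = (real K + 1)^4"
  proof -
    have "card (P2 K \<times> P2 K) = card (P2 K) * card (P2 K)" by (rule card_cartesian_product)
    also have "\<dots> = (K + 1)^2 * (K+1)^2" by (simp only: card_P2)
    also have "\<dots> = (K+1)^4" by (simp flip: power_add)
    finally show ?thesis by (metis of_nat_1 of_nat_add of_nat_power)
  qed
  ultimately show ?thesis
    using cmod_real_minus_nat by (metis AA_def of_nat_mult)
qed

lemma card_diag: "card {u \<in> P2 K. df u = 0} \<le> K + 1"
proof -
  have "{u \<in> P2 K. df u = 0} \<subseteq> (\<lambda>a. (a, a)) ` {..K}"
    by (auto simp: df_def)
  then have "card {u \<in> P2 K. df u = 0} \<le> card ((\<lambda>a. (a, a)) ` {..K})"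
    by (intro card_mono) auto
  also have "\<dots> \<le> card {..K}" by (rule card_image_le) auto
  finally show ?thesis by simp
qed

lemma S2_bound:
  fixes \<theta> :: "'a \<Rightarrow> real"
  assumes J: "finite J" and Q0: "0 \<le> Q"
    and PQ: "\<forall>k::int. 1 \<le> k \<and> k \<le> 2 * int K \<longrightarrow> cmod (\<Sum>j\<in>J. ee (of_int k * \<theta> j)) \<le> Q"
  shows "(\<Sum>j\<in>J. FF K (\<theta> j - t)) \<le> (real K + 1) * real (card J) + (real K + 1)^2 * Q"
proof -
  have PQ': "\<forall>k::int. 1 \<le> k \<and> k \<le> int K \<longrightarrow> cmod (\<Sum>j\<in>J. ee (of_int k * \<theta> j)) \<le> Q"
    using PQ by auto
  have "complex_of_real (\<Sum>j\<in>J. FF K (\<theta> j - t)) =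
     (\<Sum>j\<in>J. \<Sum>u\<in>P2 K. ee (of_int (df u) * (\<theta> j - t)))"
    by (simp only: FF_def of_real_sum norm_DK_sq)
  moreover have "cmod ((\<Sum>j\<in>J. \<Sum>u\<in>P2 K. ee (of_int (df u) * (\<theta> j - t)))
      - of_nat (card {u\<in>P2 K. df u = 0} * card J)) \<le> real (card (P2 K)) * Q"
    by (rule trig_sum_points[OF _ J _ Q0 PQ']) (auto intro: df_bound)
  ultimately have h1: "\<bar>(\<Sum>j\<in>J. FF K (\<theta> j - t)) - real (card {u\<in>P2 K. df u = 0} * card J)\<bar> \<le> real ((K+1)^2) * Q"
    using cmod_real_minus_nat card_P2 by metis
  have h2: "real (card {u\<in>P2 K. df u = 0} * card J) \<le> (real K + 1) * real (card J)"
    using card_diag[of K] by (simp add: mult_right_mono)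
  have h3: "real ((K+1)^2) * Q = (real K + 1)^2 * Q" by simp
  show ?thesis using h1 h2 h3 unfolding abs_le_iff by linarith
qed

definition gfun :: "real \<Rightarrow> real \<Rightarrow> real" where
  "gfun r s = (if s < r then 1 else r^2 / s^2)"

lemma gfun_nonneg: "gfun r s \<ge> 0" by (simp add: gfun_def)
lemma gfun_le1: "r > 0 \<Longrightarrow> gfun r s \<le> 1"
  by (auto simp: gfun_def divide_le_eq_1 power_mono)

lemma gfun_mono: assumes "r > 0" "s \<le> s'" shows "gfun r s' \<le> gfun r s"
proof (cases "s' < r")
  case True then show ?thesis using assms by (simp add: gfun_def)
next
  case False
  then have r: "r \<le> s'" by simp
  show ?thesis
  proof (cases "s < r")
    case True
    then show ?thesis using False gfun_le1[OF assms(1), of s'] by (simp add: gfun_def)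
  next
    case False
    then have "s^2 \<le> s'^2" using assms by (intro power_mono) auto
    moreover have "0 < s^2" using False assms by simp
    moreover have "0 < s'^2" using False assms by simp
    ultimately have "r^2 / s'^2 \<le> r^2 / s^2" by (intro divide_left_mono) (auto intro: mult_pos_pos)
    then show ?thesis using False \<open>\<not> s' < r\<close> by (simp add: gfun_def)
  qed
qed

lemma inv_sq_tail: assumes "1 \<le> T" "T \<le> n" shows "(\<Sum>i\<in>{T<..n}. 1 / (real i)^2) \<le> 1 / real T - 1 / real n"
  using assms(2)
proof (induction n)
  case 0 then show ?case using assms by simp
next
  case (Suc n)
  show ?case
  proof (cases "T = Suc n")
    case True then show ?thesis by simp
  next
    case False
    then have Tn: "T \<le> n" using Suc by simp
    have n1: "1 \<le> n" using Tn assms by simp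
    have "{T<..Suc n} = insert (Suc n) {T<..n}" using Tn by auto
    then have "(\<Sum>i\<in>{T<..Suc n}. 1 / (real i)^2) = 1 / (real (Suc n))^2 + (\<Sum>i\<in>{T<..n}. 1 / (real i)^2)"
      by simp
    also have "\<dots> \<le> 1 / (real (Suc n))^2 + (1 / real T - 1 / real n)"
      using Suc.IH[OF Tn] by simp
    also have "1 / (real (Suc n))^2 \<le> 1 / real n - 1 / real (Suc n)"
    proof -
      have "1 / real n - 1 / real (Suc n) = 1 / (real n * real (Suc n))"
        using n1 by (simp add: field_simps)
      moreover have "real n * real (Suc n) \<le> (real (Suc n))^2"
        by (simp add: power2_eq_square)
      moreover have "0 < real n * real (Suc n)" using n1 by simp
      ultimately show ?thesis by (simp add: frac_le)
    qed
    finally show ?thesis by simp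
  qed
qed


definition phi :: "real \<Rightarrow> nat \<Rightarrow> nat \<Rightarrow> real" where
  "phi r M i = gfun r (max 0 ((real i - 1/2) / real M))"

lemma phi_nonneg: "phi r M i \<ge> 0" by (simp add: phi_def gfun_nonneg)
lemma phi_le1: "r > 0 \<Longrightarrow> phi r M i \<le> 1" by (simp add: phi_def gfun_le1)

lemma phi_sum:
  assumes r: "r > 0" and M: "M > 0"
  shows "(\<Sum>i\<le>M. phi r M i) \<le> 4 * r * real M + 2"
proof -
  define T where "T = nat \<lceil>2 * r * real M\<rceil>"
  have rM: "0 < 2 * r * real M" using r M by simp
  have T1: "real T \<ge> 2 * r * real M" unfolding T_def using rM by linarith
  have T2: "real T < 2 * r * real M + 1" unfolding T_def using rM by linarith
  have T0: "1 \<le> T" using T1 rM by linarith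
  have first: "(\<Sum>i\<in>A. phi r M i) \<le> real (card A)" for A
  proof -
    have "(\<Sum>i\<in>A. phi r M i) \<le> (\<Sum>i\<in>A. 1)"
      using phi_le1[OF r] by (intro sum_mono) auto
    then show ?thesis by simp
  qed
  show ?thesis
  proof (cases "M \<le> T")
    case True
    have "(\<Sum>i\<le>M. phi r M i) \<le> real (card {..M})" by (rule first)
    also have "\<dots> = real M + 1" by simp
    also have "\<dots> \<le> 4 * r * real M + 2" using True T2 rM by linarith
    finally show ?thesis .
  next
    case False
    have split: "{..M} = {..T} \<union> {T<..M}" using False by auto
    have "(\<Sum>i\<le>M. phi r M i) = (\<Sum>i\<le>T. phi r M i) + (\<Sum>i\<in>{T<..M}. phi r M i)"
      unfolding split by (rule sum.union_disjoint) auto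
    also have "(\<Sum>i\<le>T. phi r M i) \<le> real T + 1" using first[of "{..T}"] by simp
    also have "(\<Sum>i\<in>{T<..M}. phi r M i) \<le> (\<Sum>i\<in>{T<..M}. (4 * r^2 * (real M)^2) * (1 / (real i)^2))"
    proof (rule sum_mono)
      fix i assume i: "i \<in> {T<..M}"
      then have i1: "real i \<ge> 1" "real i > real T" using T0 by auto
      have a: "(real i - 1/2) / real M \<ge> real i / (2 * real M)"
        using i1 M by (simp add: field_simps)
      have b: "real i / (2 * real M) > r"
        using i1 T1 M by (simp add: field_simps)
      have "phi r M i \<le> gfun r (real i / (2 * real M))"
        unfolding phi_def using a b r by (intro gfun_mono) auto
      also have "\<dots> = r^2 / (real i / (2 * real M))^2" using b by (simp add: gfun_def)
      also have "\<dots> = (4 * r^2 * (real M)^2) * (1 / (real i)^2)"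
        by (simp add: power_divide field_simps power2_eq_square)
      finally show "phi r M i \<le> (4 * r^2 * (real M)^2) * (1 / (real i)^2)" .
    qed
    also have "\<dots> = (4 * r^2 * (real M)^2) * (\<Sum>i\<in>{T<..M}. 1 / (real i)^2)"
      by (simp add: sum_distrib_left)
    also have "\<dots> \<le> (4 * r^2 * (real M)^2) * (1 / real T)"
    proof (rule mult_left_mono)
      have "(\<Sum>i\<in>{T<..M}. 1 / (real i)^2) \<le> 1 / real T - 1 / real M"
        using inv_sq_tail[OF T0] False by simp
      also have "\<dots> \<le> 1 / real T" by simp
      finally show "(\<Sum>i\<in>{T<..M}. 1 / (real i)^2) \<le> 1 / real T" .
    qed simp
    also have "\<dots> \<le> (4 * r^2 * (real M)^2) * (1 / (2 * r * real M))"
      using T1 rM by (intro mult_left_mono divide_left_mono) auto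
    also have "\<dots> = 2 * r * real M" using r M by (simp add: field_simps power2_eq_square)
    finally show ?thesis using T2 by linarith
  qed
qed

lemma nd_frac_grid: assumes "j < M" shows "nd (real j / real M) = min (real j) (real M - real j) / real M"
proof -
  have M: "real M > 0" using assms by simp
  have "0 \<le> real j / real M" "real j / real M < 1" using assms M by (auto simp: field_simps)
  then have "frac (real j / real M) = real j / real M" by (simp add: frac_eq)
  then show ?thesis unfolding nd_def using M by (simp add: min_divide_distrib_right diff_divide_distrib)
qed

lemma grid_dist_sum:
  assumes r: "r > 0" and M: "M > 0"
  shows "(\<Sum>m<M. gfun r (nd (real m / real M - 1/2 - c))) \<le> 8 * r * real M + 4"
proof -
  define k0 where "k0 = \<lfloor>real M * (c + 1/2) + 1/2\<rfloor>"
  define \<epsilon> where "\<epsilon> = (real_of_int k0 - real M * (c + 1/2)) / real M"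
  have eps: "\<bar>\<epsilon>\<bar> \<le> 1 / (2 * real M)"
  proof -
    have "\<bar>real_of_int k0 - real M * (c + 1/2)\<bar> \<le> 1/2" unfolding k0_def by linarith
    then show ?thesis using M unfolding \<epsilon>_def by (simp add: field_simps abs_divide)
  qed
  define j where "j m = nat ((int m - k0) mod int M)" for m
  define q where "q m = (int m - k0) div int M" for m
  have jM: "j m < M" for m unfolding j_def using M by (simp add: nat_less_iff)
  have jdec: "int m - k0 = int M * q m + int (j m)" for m
    unfolding j_def q_def using M by simp
  have key: "gfun r (nd (real m / real M - 1/2 - c)) \<le> phi r M (j m) + phi r M (M - j m)" for m
  proof -
    define x where "x = real m / real M - 1/2 - c"
    have xe: "real (j m) / real M = x - \<epsilon> - of_int (q m)"
    proof -
      have "real_of_int (int m - k0) = real M * of_int (q m) + real (j m)"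
        using jdec[of m] by (metis of_int_add of_int_mult of_int_of_nat_eq)
      then have "real (j m) = real m - of_int k0 - real M * of_int (q m)" by simp
      then show ?thesis unfolding x_def \<epsilon>_def using M by (simp add: field_simps)
    qed
    have "nd (real (j m) / real M) = nd (x + (- \<epsilon>))"
      unfolding xe using nd_periodic[of "x - \<epsilon>" "- q m"] by simp
    also have "\<dots> \<le> nd x + nd (- \<epsilon>)" by (rule nd_triangle)
    also have "nd (-\<epsilon>) \<le> 1 / (2 * real M)" using nd_le_abs[of "-\<epsilon>"] eps by simp
    finally have ndx: "nd (real (j m) / real M) - 1 / (2 * real M) \<le> nd x" by simp
    have "nd (real (j m) / real M) - 1 / (2 * real M) = (min (real (j m)) (real M - real (j m)) - 1/2) / real M"
      using nd_frac_grid[OF jM[of m]] M by (simp add: field_simps)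
    also have "min (real (j m)) (real M - real (j m)) = real (min (j m) (M - j m))"
    proof -
      have "real (M - j m) = real M - real (j m)" using jM[of m] by (simp add: of_nat_diff less_imp_le)
      then have "min (real (j m)) (real M - real (j m)) = min (real (j m)) (real (M - j m))" by simp
      also have "\<dots> = real (min (j m) (M - j m))" by (simp add: min_def)
      finally show ?thesis .
    qed
    finally have "max 0 ((real (min (j m) (M - j m)) - 1/2) / real M) \<le> nd x"
      using ndx nd_nonneg[of x] by simp
    then have "gfun r (nd x) \<le> phi r M (min (j m) (M - j m))"
      unfolding phi_def by (rule gfun_mono[OF r])
    also have "\<dots> \<le> phi r M (j m) + phi r M (M - j m)"
      using phi_nonneg[of r M "j m"] phi_nonneg[of r M "M - j m"] by (simp add: min_def)
    finally show ?thesis unfolding x_def .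
  qed
  have inj: "inj_on j {..<M}"
  proof
    fix m1 m2 assume m1: "m1 \<in> {..<M}" and m2: "m2 \<in> {..<M}" and e: "j m1 = j m2"
    have "int m1 - int m2 = int M * (q m1 - q m2)"
      using jdec[of m1] jdec[of m2] e by (simp add: algebra_simps)
    moreover have "\<bar>int m1 - int m2\<bar> < int M" using m1 m2 by auto
    ultimately have "q m1 = q m2"
    proof (rule_tac ccontr)
      assume d: "int m1 - int m2 = int M * (q m1 - q m2)" and l: "\<bar>int m1 - int m2\<bar> < int M"
        and ne: "q m1 \<noteq> q m2"
      then have "1 \<le> \<bar>q m1 - q m2\<bar>" by linarith
      then have "int M * 1 \<le> int M * \<bar>q m1 - q m2\<bar>" by (intro mult_left_mono) auto
      then have "int M \<le> \<bar>int m1 - int m2\<bar>" using d by (simp add: abs_mult)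
      then show False using l by simp
    qed
    then show "m1 = m2" using jdec[of m1] jdec[of m2] e by simp
  qed
  have img: "j ` {..<M} = {..<M}"
  proof (rule card_subset_eq)
    show "j ` {..<M} \<subseteq> {..<M}" using jM by auto
    show "card (j ` {..<M}) = card {..<M}" using card_image[OF inj] by simp
  qed simp
  have "(\<Sum>m<M. gfun r (nd (real m / real M - 1/2 - c))) \<le> (\<Sum>m<M. phi r M (j m) + phi r M (M - j m))"
    by (intro sum_mono key)
  also have "\<dots> = (\<Sum>i\<in>j ` {..<M}. phi r M i + phi r M (M - i))"
    by (simp add: sum.reindex[OF inj])
  also have "\<dots> = (\<Sum>i<M. phi r M i) + (\<Sum>i<M. phi r M (M - i))"
    unfolding img by (simp add: sum.distrib)
  also have "(\<Sum>i<M. phi r M i) \<le> (\<Sum>i\<le>M. phi r M i)"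
    by (intro sum_mono2) (auto simp: phi_nonneg)
  also have "(\<Sum>i<M. phi r M (M - i)) \<le> (\<Sum>i\<le>M. phi r M i)"
  proof -
    have "(\<Sum>i<M. phi r M (M - i)) = (\<Sum>i<M. phi r M (Suc i))"
      using sum.nat_diff_reindex[of "\<lambda>i. phi r M (Suc i)" M] by (simp add: Suc_diff_Suc)
    also have "\<dots> \<le> phi r M 0 + (\<Sum>i<M. phi r M (Suc i))" using phi_nonneg by simp
    also have "\<dots> = (\<Sum>i<Suc M. phi r M i)" by (rule sum.lessThan_Suc_shift[symmetric])
    also have "\<dots> = (\<Sum>i\<le>M. phi r M i)" by (simp add: lessThan_Suc_atMost)
    finally show ?thesis .
  qed
  finally show ?thesis using phi_sum[OF r M] by linarith
qed


lemma mismatch_dist: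
  fixes u v a b :: real
  assumes u: "-1/2 \<le> u" "u < 1/2" and v: "-1/2 \<le> v" "v < 1/2"
    and ab: "-1/2 \<le> a" "a \<le> b" "b \<le> 1/2"
    and cases: "(a \<le> u \<and> u \<le> b \<and> (v \<le> a \<or> b \<le> v)) \<or> (a \<le> v \<and> v \<le> b \<and> (u \<le> a \<or> b \<le> u))"
  shows "min (nd (v - a)) (nd (v - b)) \<le> nd (u - v)"
proof -
  obtain n where n: "nd (u - v) = \<bar>u - v - of_int n\<bar>" using nd_ex by blast
  have a0: "nd (v - a) \<le> \<bar>v - a - of_int 0\<bar>" by (rule nd_le)
  have a1: "nd (v - a) \<le> \<bar>v - a - of_int (-1)\<bar>" by (rule nd_le)
  have b0: "nd (v - b) \<le> \<bar>v - b - of_int 0\<bar>" by (rule nd_le)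
  have b1: "nd (v - b) \<le> \<bar>v - b - of_int (-1)\<bar>" by (rule nd_le)
  have "n = 0 \<or> n \<ge> 1 \<or> n \<le> -1" by linarith
  moreover
  { assume "n = 0"
    then have "min (nd (v - a)) (nd (v - b)) \<le> \<bar>u - v - of_int n\<bar>"
      using a0 b0 cases by (auto simp: abs_if min_def split: if_splits) }
  moreover
  { assume n1: "n \<ge> 1"
    then have "real_of_int n \<ge> 1" by simp
    then have "\<bar>u - v - of_int n\<bar> \<ge> 1 + v - u" using u v by (simp add: abs_if)
    then have "min (nd (v - a)) (nd (v - b)) \<le> \<bar>u - v - of_int n\<bar>"
      using a0 b1 cases u v ab by (auto simp: abs_if min_def split: if_splits) }
  moreover
  { assume n1: "n \<le> -1"
    then have "real_of_int n \<le> -1" by simp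
    then have "\<bar>u - v - of_int n\<bar> \<ge> u - v + 1" using u v by (simp add: abs_if)
    moreover have "nd (v - a) \<le> \<bar>v - a - of_int 1\<bar>" by (rule nd_le)
    ultimately have "min (nd (v - a)) (nd (v - b)) \<le> \<bar>u - v - of_int n\<bar>"
      using b0 cases u v ab by (auto simp: abs_if min_def split: if_splits) }
  ultimately show ?thesis using n by auto
qed

lemma card_nat_closed: assumes "0 \<le> \<alpha>" "\<alpha> \<le> \<beta>"
  shows "real (card {m::nat. \<alpha> \<le> real m \<and> real m \<le> \<beta>}) \<le> \<beta> - \<alpha> + 1"
proof -
  have "{m::nat. \<alpha> \<le> real m \<and> real m \<le> \<beta>} \<subseteq> {nat \<lceil>\<alpha>\<rceil>..nat \<lfloor>\<beta>\<rfloor>}"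
    using assms by (auto simp: le_nat_iff ceiling_le_iff le_floor_iff nat_le_iff)
  then have "card {m::nat. \<alpha> \<le> real m \<and> real m \<le> \<beta>} \<le> card {nat \<lceil>\<alpha>\<rceil>..nat \<lfloor>\<beta>\<rfloor>}"
    by (intro card_mono) auto
  also have "\<dots> = Suc (nat \<lfloor>\<beta>\<rfloor>) - nat \<lceil>\<alpha>\<rceil>" by simp
  finally have c: "real (card {m::nat. \<alpha> \<le> real m \<and> real m \<le> \<beta>}) \<le> real (Suc (nat \<lfloor>\<beta>\<rfloor>) - nat \<lceil>\<alpha>\<rceil>)"
    by linarith
  have "real (Suc (nat \<lfloor>\<beta>\<rfloor>) - nat \<lceil>\<alpha>\<rceil>) \<le> \<beta> - \<alpha> + 1"
  proof -
    have "\<lceil>\<alpha>\<rceil> \<le> \<lfloor>\<beta>\<rfloor> + 1" using assms by linarith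
    then have "nat \<lceil>\<alpha>\<rceil> \<le> Suc (nat \<lfloor>\<beta>\<rfloor>)" using assms by linarith
    then have "real (Suc (nat \<lfloor>\<beta>\<rfloor>) - nat \<lceil>\<alpha>\<rceil>) = real (nat \<lfloor>\<beta>\<rfloor>) + 1 - real (nat \<lceil>\<alpha>\<rceil>)"
      by (simp add: of_nat_diff)
    moreover have "real (nat \<lfloor>\<beta>\<rfloor>) \<le> \<beta>" using assms by linarith
    moreover have "real (nat \<lceil>\<alpha>\<rceil>) \<ge> \<alpha>" using assms by linarith
    ultimately show ?thesis by linarith
  qed
  then show ?thesis using c by linarith
qed

lemma card_nat_open: assumes "0 \<le> \<alpha>"
  shows "real (card {m::nat. \<alpha> < real m \<and> real m < \<beta>}) \<ge> \<beta> - \<alpha> - 1"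
proof (cases "\<beta> - \<alpha> - 1 \<le> 0")
  case True then show ?thesis by simp
next
  case False
  define lo where "lo = nat (\<lfloor>\<alpha>\<rfloor> + 1)"
  define hi where "hi = nat (\<lceil>\<beta>\<rceil> - 1)"
  have lo: "real lo = of_int \<lfloor>\<alpha>\<rfloor> + 1" unfolding lo_def using assms by simp
  have hi: "real hi = of_int \<lceil>\<beta>\<rceil> - 1" unfolding hi_def using assms False
    by (simp add: of_nat_nat)
  have "{lo..hi} \<subseteq> {m::nat. \<alpha> < real m \<and> real m < \<beta>}"
  proof
    fix m assume "m \<in> {lo..hi}"
    then have "real lo \<le> real m" "real m \<le> real hi" by auto
    then show "m \<in> {m::nat. \<alpha> < real m \<and> real m < \<beta>}" using lo hi by simp linarith
  qed
  then have "card {lo..hi} \<le> card {m::nat. \<alpha> < real m \<and> real m < \<beta>}"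
  proof (rule card_mono[rotated])
    have "{m::nat. \<alpha> < real m \<and> real m < \<beta>} \<subseteq> {..nat \<lceil>\<beta>\<rceil>}"
      by (auto simp: le_nat_iff) linarith
    then show "finite {m::nat. \<alpha> < real m \<and> real m < \<beta>}" by (rule finite_subset) auto
  qed
  moreover have "real (card {lo..hi}) \<ge> \<beta> - \<alpha> - 1"
  proof -
    have "lo \<le> hi" using lo hi False by linarith
    then have "real (card {lo..hi}) = real hi + 1 - real lo" by (simp add: of_nat_diff)
    then show ?thesis using lo hi by linarith
  qed
  ultimately show ?thesis by linarith
qed


lemma gfun_min: "r > 0 \<Longrightarrow> gfun r (min x y) \<le> gfun r x + gfun r y"
  using gfun_nonneg[of r x] gfun_nonneg[of r y] by (simp add: min_def)

lemma A_facts: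
  assumes "1 \<le> K"
  shows "(real K + 1)^4 \<le> 2 * real (AA K) * (real K + 1)" "real (AA K) > 0"
proof -
  have h: "(real K + 1)^3 / 2 \<le> real (AA K)" by (rule AA_lower)
  have "(real K + 1)^4 = ((real K + 1)^3 / 2) * (2 * (real K + 1))" by (simp add: eval_nat_numeral)
  also have "\<dots> \<le> real (AA K) * (2 * (real K + 1))" using h by (intro mult_right_mono) auto
  finally show "(real K + 1)^4 \<le> 2 * real (AA K) * (real K + 1)" by (simp add: algebra_simps)
  have "0 < (real K + 1)^3 / 2" by simp
  then show "real (AA K) > 0" using h by linarith
qed

lemma discrepancy:
  fixes \<theta> :: "'a \<Rightarrow> real" and I :: "real set"
  assumes J: "finite J" and \<theta>J: "\<forall>j\<in>J. \<theta> j \<in> {-1/2..<1/2}" and K: "1 \<le> K" and Q0: "0 \<le> Q"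
    and PQ: "\<forall>k::int. 1 \<le> k \<and> k \<le> 2 * int K \<longrightarrow> cmod (\<Sum>j\<in>J. ee (of_int k * \<theta> j)) \<le> Q"
    and Iint: "real_interval I" and Isub: "I \<subseteq> {-1/2..<1/2}"
  shows "\<bar>real (card {j\<in>J. \<theta> j \<in> I}) - real (card J) * interval_length I\<bar>
           \<le> 32 * real (card J) / (real K + 1) + (2 * real K + 66) * Q + 1"
proof (cases "I = {}")
  case True
  have "0 \<le> 32 * real (card J) / (real K + 1) + (2 * real K + 66) * Q" using Q0 by simp
  then show ?thesis using True by (simp add: interval_length_def)
next
  case Ine: False
  define a where "a = Inf I"
  define b where "b = Sup I"
  have bddb: "bdd_below I" using Isub unfolding bdd_below_def by (auto intro!: exI[of _ "-1/2"])
  have bdda: "bdd_above I" using Isub unfolding bdd_above_def by (auto intro!: exI[of _ "1/2"])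
  have aI: "\<And>x. x \<in> I \<Longrightarrow> a \<le> x" unfolding a_def using bddb by (simp add: cInf_lower)
  have bI: "\<And>x. x \<in> I \<Longrightarrow> x \<le> b" unfolding b_def using bdda by (simp add: cSup_upper)
  have a0: "-1/2 \<le> a" unfolding a_def using Ine Isub by (intro cInf_greatest) auto
  have b0: "b \<le> 1/2" unfolding b_def using Ine Isub by (intro cSup_least) auto
  have ab: "a \<le> b" using Ine aI bI by (meson all_not_in_conv order_trans)
  have openI: "y \<in> I" if ay: "a < y" and yb: "y < b" for y
  proof -
    obtain x where x: "x \<in> I" "x < y" using ay Ine bddb unfolding a_def by (meson cInf_less_iff)
    obtain z where z: "z \<in> I" "y < z" using yb Ine bdda unfolding b_def by (meson less_cSup_iff)
    show ?thesis using Iint x z unfolding real_interval_def by (meson less_imp_le)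
  qed
  have len: "interval_length I = b - a" using Ine by (simp add: interval_length_def a_def b_def)
  define N where "N = real (card J)"
  define A where "A = real (AA K)"
  have A1: "(real K + 1)^4 \<le> 2 * A * (real K + 1)" and A0: "A > 0"
    using A_facts[OF K] by (simp_all add: A_def)
  have Alow: "(real K + 1)^3 / 2 \<le> A" unfolding A_def by (rule AA_lower)
  define V where "V = N + 2 * (real K + 1) * Q"
  have N0: "0 \<le> N" by (simp add: N_def)
  have V0: "0 \<le> V" using N0 Q0 by (simp add: V_def)
  define r where "r = 2 / (real K + 1)"
  have r0: "r > 0" by (simp add: r_def)
  define M where "M = nat \<lceil>2 * N + 8 * V\<rceil> + 2 * K + 1"
  have M2K: "M > 2 * K" and M0: "M > 0" by (simp_all add: M_def)
  have Mbig: "real M \<ge> 2 * N + 8 * V" unfolding M_def by linarith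
  have RM: "real M > 0" using M0 by simp
  define t where "t m = real m / real M - 1/2" for m :: nat
  have tr: "-1/2 \<le> t m \<and> t m < 1/2" if "m < M" for m
    using that RM by (simp add: t_def field_simps)
  define W where "W j m = WW K (\<theta> j - t m)" for j m
  have W0: "W j m \<ge> 0" for j m by (simp add: W_def WW_nonneg)
  define C where "C = {j\<in>J. \<theta> j \<in> I}"
  define G where "G = {m\<in>{..<M}. t m \<in> I}"
  have finG: "finite G" by (simp add: G_def)
  have row: "(\<Sum>m<M. W j m) = real M * A" for j
  proof -
    have "(\<Sum>m<M. W j m) = (\<Sum>m<M. WW K ((\<theta> j + 1/2) - real m / real M))"
      by (intro sum.cong refl) (simp add: W_def t_def algebra_simps)
    also have "\<dots> = real M * A" unfolding A_def by (rule WW_grid[OF M2K])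
    finally show ?thesis .
  qed
  define X where "X = (\<Sum>j\<in>J. \<Sum>m<M. (if \<theta> j \<in> I then W j m else 0))"
  have X: "X = real M * A * real (card C)"
  proof -
    have "X = (\<Sum>j\<in>J. if \<theta> j \<in> I then (\<Sum>m<M. W j m) else 0)"
      unfolding X_def by (intro sum.cong refl) auto
    also have "\<dots> = (\<Sum>j\<in>C. \<Sum>m<M. W j m)"
      unfolding C_def by (simp add: sum.inter_filter[OF J])
    also have "\<dots> = real M * A * real (card C)" by (simp add: row)
    finally show ?thesis .
  qed
  define Z where "Z = (\<Sum>j\<in>J. \<Sum>m<M. (if t m \<in> I then W j m else 0))"
  have Z1: "Z = (\<Sum>m\<in>G. \<Sum>j\<in>J. W j m)"
  proof -
    have "Z = (\<Sum>m<M. \<Sum>j\<in>J. (if t m \<in> I then W j m else 0))"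
      unfolding Z_def by (rule sum.swap)
    also have "\<dots> = (\<Sum>m<M. if t m \<in> I then (\<Sum>j\<in>J. W j m) else 0)"
      by (intro sum.cong refl) auto
    also have "\<dots> = (\<Sum>m\<in>G. \<Sum>j\<in>J. W j m)"
      unfolding G_def by (rule sum.inter_filter[symmetric]) simp
    finally show ?thesis .
  qed
  have S4m: "\<bar>(\<Sum>j\<in>J. W j m) - A * N\<bar> \<le> (real K + 1)^4 * Q" for m
    unfolding W_def A_def N_def by (rule S4_bound[OF J Q0 PQ])
  have Z2: "\<bar>Z - real (card G) * (A * N)\<bar> \<le> real (card G) * ((real K + 1)^4 * Q)"
  proof -
    have "Z - real (card G) * (A * N) = (\<Sum>m\<in>G. (\<Sum>j\<in>J. W j m) - A * N)"
      unfolding Z1 by (simp add: sum_subtractf)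
    then have "\<bar>Z - real (card G) * (A * N)\<bar> \<le> (\<Sum>m\<in>G. \<bar>(\<Sum>j\<in>J. W j m) - A * N\<bar>)"
      by (simp add: sum_abs)
    also have "\<dots> \<le> (\<Sum>m\<in>G. (real K + 1)^4 * Q)" by (intro sum_mono S4m)
    finally show ?thesis by simp
  qed
  define B where "B m = (\<Sum>j\<in>J. if (\<theta> j \<in> I) \<noteq> (t m \<in> I) then W j m else 0)" for m
  have XZ: "\<bar>X - Z\<bar> \<le> (\<Sum>m<M. B m)"
  proof -
    have "X - Z = (\<Sum>j\<in>J. \<Sum>m<M. (if \<theta> j \<in> I then W j m else 0) - (if t m \<in> I then W j m else 0))"
      unfolding X_def Z_def by (simp add: sum_subtractf)
    then have "\<bar>X - Z\<bar> \<le> (\<Sum>j\<in>J. \<bar>\<Sum>m<M. (if \<theta> j \<in> I then W j m else 0) - (if t m \<in> I then W j m else 0)\<bar>)"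
      by (simp add: sum_abs)
    also have "\<dots> \<le> (\<Sum>j\<in>J. \<Sum>m<M. \<bar>(if \<theta> j \<in> I then W j m else 0) - (if t m \<in> I then W j m else 0)\<bar>)"
      by (intro sum_mono sum_abs)
    also have "\<dots> = (\<Sum>j\<in>J. \<Sum>m<M. if (\<theta> j \<in> I) \<noteq> (t m \<in> I) then W j m else 0)"
      by (intro sum.cong refl) (auto simp: W0 abs_of_nonneg)
    also have "\<dots> = (\<Sum>m<M. B m)" unfolding B_def by (rule sum.swap)
    finally show ?thesis .
  qed
  define \<sigma> where "\<sigma> m = min (nd (t m - a)) (nd (t m - b))" for m
  have Bm: "B m \<le> A * V * gfun r (\<sigma> m)" if mM: "m < M" for m
  proof -
    have "B m \<le> (\<Sum>j\<in>J. W j m)" unfolding B_def by (intro sum_mono) (auto simp: W0)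
    also have "\<dots> \<le> A * N + (real K + 1)^4 * Q" using S4m[of m] by linarith
    also have "\<dots> \<le> A * V"
    proof -
      have "(real K + 1)^4 * Q \<le> (2 * A * (real K + 1)) * Q" using A1 Q0 by (intro mult_right_mono)
      then show ?thesis unfolding V_def by (simp add: algebra_simps)
    qed
    finally have Bav: "B m \<le> A * V" .
    show ?thesis
    proof (cases "\<sigma> m < r")
      case True then show ?thesis using Bav by (simp add: gfun_def)
    next
      case False
      then have sr: "r \<le> \<sigma> m" by simp
      then have s0: "\<sigma> m > 0" using r0 by simp
      have mis: "W j m \<le> FF K (\<theta> j - t m) / (\<sigma> m)^2"
        if j: "j \<in> J" and d: "(\<theta> j \<in> I) \<noteq> (t m \<in> I)" for j
      proof -
        have u: "-1/2 \<le> \<theta> j" "\<theta> j < 1/2" using \<theta>J j by auto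
        have cs: "(a \<le> \<theta> j \<and> \<theta> j \<le> b \<and> (t m \<le> a \<or> b \<le> t m)) \<or> (a \<le> t m \<and> t m \<le> b \<and> (\<theta> j \<le> a \<or> b \<le> \<theta> j))"
          using d aI bI openI by (meson not_le)
        have "\<sigma> m \<le> nd (\<theta> j - t m)"
          unfolding \<sigma>_def using mismatch_dist[OF u tr[OF mM, THEN conjunct1] tr[OF mM, THEN conjunct2] a0 ab b0 cs] .
        then have nd0: "nd (\<theta> j - t m) > 0" and sq: "(\<sigma> m)^2 \<le> (nd (\<theta> j - t m))^2"
          using s0 by (auto intro: power_mono)
        have "W j m = FF K (\<theta> j - t m) * FF K (\<theta> j - t m)" by (simp add: W_def WW_FF)
        also have "\<dots> \<le> FF K (\<theta> j - t m) * (1 / (nd (\<theta> j - t m))^2)"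
          by (intro mult_left_mono FF_bound nd0 FF_nonneg)
        also have "\<dots> \<le> FF K (\<theta> j - t m) * (1 / (\<sigma> m)^2)"
          using sq s0 nd0 by (intro mult_left_mono divide_left_mono FF_nonneg) (auto intro: mult_pos_pos)
        finally show ?thesis by simp
      qed
      have "B m \<le> (\<Sum>j\<in>J. FF K (\<theta> j - t m) / (\<sigma> m)^2)"
        unfolding B_def by (intro sum_mono) (auto intro: mis simp: FF_nonneg)
      also have "\<dots> = (\<Sum>j\<in>J. FF K (\<theta> j - t m)) / (\<sigma> m)^2" by (simp add: sum_divide_distrib)
      also have "\<dots> \<le> ((real K + 1) * N + (real K + 1)^2 * Q) / (\<sigma> m)^2"
        unfolding N_def by (intro divide_right_mono S2_bound[OF J Q0 PQ]) simp
      also have "\<dots> \<le> A * V * (r^2 / (\<sigma> m)^2)"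
      proof -
        have "(real K + 1) * N + (real K + 1)^2 * Q \<le> (real K + 1) * V"
          unfolding V_def using Q0 by (simp add: algebra_simps power2_eq_square)
        also have "\<dots> \<le> A * V * r^2"
        proof -
          have "A * r^2 \<ge> (real K + 1)^3 / 2 * r^2" using Alow by (intro mult_right_mono) auto
          moreover have "(real K + 1)^3 / 2 * r^2 = 2 * (real K + 1)"
          proof -
            have K1: "real K + 1 \<noteq> 0" by simp
            have "(real K + 1)^3 / 2 * r^2 = (real K + 1) * (real K + 1) * (real K + 1) * 2 / ((real K + 1) * (real K + 1))"
              by (simp add: r_def power2_eq_square power3_eq_cube)
            also have "\<dots> = 2 * (real K + 1)" using K1 by simp
            finally show ?thesis .
          qed
          ultimately have "A * r^2 \<ge> real K + 1" by simp
          then have "(real K + 1) * V \<le> (A * r^2) * V" using V0 by (intro mult_right_mono)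
          then show ?thesis by (simp add: mult_ac)
        qed
        finally show ?thesis using s0 by (simp add: divide_right_mono)
      qed
      also have "\<dots> = A * V * gfun r (\<sigma> m)" using False by (simp add: gfun_def)
      finally show ?thesis .
    qed
  qed
  have sumB: "(\<Sum>m<M. B m) \<le> A * V * (16 * r * real M + 8)"
  proof -
    have "(\<Sum>m<M. B m) \<le> (\<Sum>m<M. A * V * (gfun r (nd (real m / real M - 1/2 - a)) + gfun r (nd (real m / real M - 1/2 - b))))"
    proof (rule sum_mono)
      fix m assume "m \<in> {..<M}"
      then have "B m \<le> A * V * gfun r (\<sigma> m)" using Bm by simp
      also have "\<dots> \<le> A * V * (gfun r (nd (real m / real M - 1/2 - a)) + gfun r (nd (real m / real M - 1/2 - b)))"
        using gfun_min[OF r0] A0 V0 unfolding \<sigma>_def t_def by (intro mult_left_mono) auto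
      finally show "B m \<le> \<dots>" .
    qed
    also have "\<dots> = A * V * ((\<Sum>m<M. gfun r (nd (real m / real M - 1/2 - a))) + (\<Sum>m<M. gfun r (nd (real m / real M - 1/2 - b))))"
      by (simp only: sum.distrib[symmetric] sum_distrib_left)
    also have "\<dots> \<le> A * V * ((8 * r * real M + 4) + (8 * r * real M + 4))"
      using A0 V0 grid_dist_sum[OF r0 M0, of a] grid_dist_sum[OF r0 M0, of b]
      by (intro mult_left_mono add_mono) auto
    finally show ?thesis by (simp add: algebra_simps)
  qed
  define \<alpha> where "\<alpha> = real M * (a + 1/2)"
  define \<beta> where "\<beta> = real M * (b + 1/2)"
  have \<alpha>0: "0 \<le> \<alpha>" using a0 RM by (simp add: \<alpha>_def)
  have \<alpha>\<beta>: "\<alpha> \<le> \<beta>" using ab RM by (simp add: \<alpha>_def \<beta>_def)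
  have \<beta>M: "\<beta> \<le> real M" using b0 RM by (simp add: \<beta>_def)
  have tiff: "t m \<in> {a<..<b} \<longleftrightarrow> \<alpha> < real m \<and> real m < \<beta>" "a \<le> t m \<and> t m \<le> b \<longleftrightarrow> \<alpha> \<le> real m \<and> real m \<le> \<beta>" for m
    using RM by (auto simp: t_def \<alpha>_def \<beta>_def field_simps)
  have Gup: "real (card G) \<le> real M * (b - a) + 1"
  proof -
    have "G \<subseteq> {m::nat. \<alpha> \<le> real m \<and> real m \<le> \<beta>}" using aI bI tiff(2) unfolding G_def by blast
    moreover have "finite {m::nat. \<alpha> \<le> real m \<and> real m \<le> \<beta>}"
      by (rule finite_subset[of _ "{..nat \<lceil>\<beta>\<rceil>}"]) (auto simp: le_nat_iff, linarith)
    ultimately have "card G \<le> card {m::nat. \<alpha> \<le> real m \<and> real m \<le> \<beta>}" by (rule card_mono[rotated])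
    then have "real (card G) \<le> \<beta> - \<alpha> + 1" using card_nat_closed[OF \<alpha>0 \<alpha>\<beta>] by linarith
    then show ?thesis by (simp add: \<alpha>_def \<beta>_def algebra_simps)
  qed
  have Glow: "real (card G) \<ge> real M * (b - a) - 1"
  proof -
    have "{m::nat. \<alpha> < real m \<and> real m < \<beta>} \<subseteq> G"
    proof
      fix m assume "m \<in> {m::nat. \<alpha> < real m \<and> real m < \<beta>}"
      then have m: "\<alpha> < real m" "real m < \<beta>" by auto
      then have "m < M" using \<beta>M by linarith
      moreover have "t m \<in> I" using tiff(1)[of m] m openI by auto
      ultimately show "m \<in> G" by (simp add: G_def)
    qed
    then have "card {m::nat. \<alpha> < real m \<and> real m < \<beta>} \<le> card G" by (rule card_mono[OF finG])
    then have "\<beta> - \<alpha> - 1 \<le> real (card G)" using card_nat_open[OF \<alpha>0, of \<beta>] by linarith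
    then show ?thesis by (simp add: \<alpha>_def \<beta>_def algebra_simps)
  qed
  have GM: "real (card G) \<le> real M"
  proof -
    have "card G \<le> card {..<M}" unfolding G_def by (intro card_mono) auto
    then show ?thesis by simp
  qed
  have cardC: "card {j\<in>J. \<theta> j \<in> I} = card C" by (simp add: C_def)
  define c where "c = real (card C)"
  have main: "real M * A * (c - N * (b - a)) = (X - Z) + (Z - real (card G) * (A * N)) + A * N * (real (card G) - real M * (b - a))"
    using X by (simp add: c_def algebra_simps)
  have E2: "real (card G) * ((real K + 1)^4 * Q) \<le> real M * (2 * A * (real K + 1) * Q)"
  proof -
    have "(real K + 1)^4 * Q \<le> 2 * A * (real K + 1) * Q" using A1 Q0 by (intro mult_right_mono)
    then have "real (card G) * ((real K + 1)^4 * Q) \<le> real (card G) * (2 * A * (real K + 1) * Q)"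
      by (intro mult_left_mono) auto
    also have "\<dots> \<le> real M * (2 * A * (real K + 1) * Q)"
      using GM A0 Q0 by (intro mult_right_mono) auto
    finally show ?thesis .
  qed
  have E3: "\<bar>A * N * (real (card G) - real M * (b - a))\<bar> \<le> A * N"
  proof -
    have "\<bar>real (card G) - real M * (b - a)\<bar> \<le> 1" using Gup Glow by linarith
    then have "A * N * \<bar>real (card G) - real M * (b - a)\<bar> \<le> A * N * 1"
      using A0 N0 by (intro mult_left_mono) auto
    then show ?thesis using A0 N0 by (simp add: abs_mult)
  qed
  have "real M * A * \<bar>c - N * (b - a)\<bar> = \<bar>real M * A * (c - N * (b - a))\<bar>"
    using RM A0 by (simp add: abs_mult)
  also have "\<dots> \<le> A * V * (16 * r * real M + 8) + real M * (2 * A * (real K + 1) * Q) + A * N"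
    unfolding main using XZ sumB Z2 E2 E3 by linarith
  also have "\<dots> \<le> real M * A * (16 * r * V + 2 * (real K + 1) * Q + 1)"
  proof -
    have "A * (8 * V + N) \<le> A * real M" using Mbig N0 A0 by (intro mult_left_mono) auto
    then show ?thesis by (simp add: algebra_simps)
  qed
  finally have "\<bar>c - N * (b - a)\<bar> \<le> 16 * r * V + 2 * (real K + 1) * Q + 1"
    using RM A0 by (simp add: mult_le_cancel_left_pos)
  also have "16 * r * V + 2 * (real K + 1) * Q + 1 = 32 * N / (real K + 1) + (2 * real K + 66) * Q + 1"
    by (simp add: r_def V_def field_simps)
  finally show ?thesis using cardC len by (simp add: c_def N_def)
qed


definition hser :: "complex \<Rightarrow> complex fps" where
  "hser c = Abs_fps (\<lambda>n. if n = 0 then 0 else - (c ^ n))"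

lemma hser_mult: "(1 - fps_const c * fps_X) * hser c = - (fps_const c * fps_X)"
proof (rule fps_ext)
  fix n
  show "((1 - fps_const c * fps_X) * hser c) $ n = (- (fps_const c * fps_X)) $ n"
  proof -
    have "(1 - fps_const c * fps_X) * hser c = hser c - fps_const c * (fps_X * hser c)"
      by (simp add: algebra_simps)
    then have "((1 - fps_const c * fps_X) * hser c) $ n = hser c $ n - c * (fps_X * hser c) $ n"
      by simp
    also have "\<dots> = (- (fps_const c * fps_X)) $ n"
    proof (cases n)
      case 0 then show ?thesis by (simp add: hser_def)
    next
      case (Suc k)
      then show ?thesis by (cases k) (simp_all add: hser_def)
    qed
    finally show ?thesis .
  qed
qed

definition Hs :: "('a \<Rightarrow> complex) \<Rightarrow> 'a set \<Rightarrow> complex fps" where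
  "Hs c J = Abs_fps (\<lambda>n. if n = 0 then 0 else - (\<Sum>j\<in>J. c j ^ n))"

lemma Hs_insert: "finite J \<Longrightarrow> i \<notin> J \<Longrightarrow> Hs c (insert i J) = Hs c J + hser (c i)"
  by (rule fps_ext) (simp add: Hs_def hser_def)

lemma Hs_empty: "Hs c {} = 0"
  by (rule fps_ext) (simp add: Hs_def)

lemma prod_deriv:
  assumes "finite J"
  shows "fps_X * fps_deriv (\<Prod>j\<in>J. 1 - fps_const (c j) * fps_X) = (\<Prod>j\<in>J. 1 - fps_const (c j) * fps_X) * Hs c J"
  using assms
proof (induction J rule: finite_induct)
  case empty then show ?case by (simp add: Hs_empty)
next
  case (insert i J)
  define P where "P = (\<Prod>j\<in>J. 1 - fps_const (c j) * fps_X)"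
  define u where "u = 1 - fps_const (c i) * fps_X"
  have Pi: "(\<Prod>j\<in>insert i J. 1 - fps_const (c j) * fps_X) = u * P"
    using insert by (simp add: P_def u_def)
  have du: "fps_deriv u = - fps_const (c i)" by (simp add: u_def)
  have "fps_X * fps_deriv (u * P) = fps_X * (fps_deriv u * P + u * fps_deriv P)"
    by (simp add: fps_deriv_mult mult.commute)
  also have "\<dots> = - (fps_const (c i) * fps_X) * P + u * (fps_X * fps_deriv P)"
    by (simp add: du algebra_simps del: fps_const_neg add: fps_const_neg[symmetric])
  also have "\<dots> = (u * hser (c i)) * P + u * (P * Hs c J)"
    using insert.IH by (simp add: P_def u_def hser_mult)
  also have "\<dots> = (u * P) * (Hs c J + hser (c i))" by (simp add: algebra_simps)
  also have "\<dots> = (u * P) * Hs c (insert i J)" using insert by (simp add: Hs_insert)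
  finally show ?case using Pi by simp
qed

lemma prod_nth0: "(\<Prod>j\<in>J. 1 - fps_const (c j) * fps_X) $ 0 = (1::complex)"
proof (induction J rule: infinite_finite_induct)
  case (infinite A) then show ?case by simp
next
  case empty then show ?case by simp
next
  case (insert x F) then show ?case by simp
qed

lemma fps_log_prod:
  fixes c :: "'a \<Rightarrow> complex" and S :: "nat \<Rightarrow> complex"
  assumes J: "finite J"
    and L: "fps_exp 1 oo Abs_fps (\<lambda>n. if n = 0 then 0 else S n / of_nat n) = (\<Prod>j\<in>J. 1 - fps_const (c j) * fps_X)"
    and n: "n \<ge> 1"
  shows "S n = - (\<Sum>j\<in>J. c j ^ n)"
proof -
  define G where "G = Abs_fps (\<lambda>n. if n = 0 then 0 else S n / of_nat n)"
  define P where "P = (\<Prod>j\<in>J. 1 - fps_const (c j) * fps_X)"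
  have G0: "G $ 0 = 0" by (simp add: G_def)
  have LP: "fps_exp 1 oo G = P" using L by (simp add: G_def P_def)
  have "fps_deriv (fps_exp 1 oo G) = (fps_deriv (fps_exp 1) oo G) * fps_deriv G"
    by (rule fps_compose_deriv[OF G0])
  then have dP: "fps_deriv P = P * fps_deriv G" using LP by simp
  have "P * (fps_X * fps_deriv G) = P * Hs c J"
    using prod_deriv[OF J, of c] dP by (simp add: P_def algebra_simps)
  moreover have "P \<noteq> 0"
  proof
    assume "P = 0"
    then have "P $ 0 = 0" by simp
    then show False using prod_nth0[of c J] by (simp add: P_def)
  qed
  ultimately have eq: "fps_X * fps_deriv G = Hs c J" by simp
  have "(fps_X * fps_deriv G) $ n = S n"
  proof -
    obtain k where k: "n = Suc k" using n by (cases n) auto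
    have "(fps_X * fps_deriv G) $ n = of_nat (Suc k) * G $ Suc k" using k by simp
    also have "\<dots> = of_nat (Suc k) * (S (Suc k) / of_nat (Suc k))" by (simp add: G_def del: of_nat_Suc)
    also have "\<dots> = S n" using k of_nat_eq_0_iff[of "Suc k"] by (simp del: of_nat_Suc)
    finally show ?thesis .
  qed
  moreover have "Hs c J $ n = - (\<Sum>j\<in>J. c j ^ n)" using n by (simp add: Hs_def)
  ultimately show ?thesis using eq by simp
qed


lemma frob_sum_poly:
  fixes f :: "'k::field poly"
  assumes pr: "prime CHAR('k)" and m: "m = CHAR('k) ^ k"
  shows "poly f x ^ m = (\<Sum>i\<le>degree f. (coeff f i) ^ m * (x ^ m) ^ i)"
proof -
  have "poly f x ^ m = (\<Sum>i\<le>degree f. coeff f i * x ^ i) ^ m" by (simp add: poly_altdef)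
  also have "\<dots> = (\<Sum>i\<le>degree f. (coeff f i * x ^ i) ^ m)"
    by (rule freshmans_dream_sum'[OF pr m])
  also have "\<dots> = (\<Sum>i\<le>degree f. (coeff f i) ^ m * (x ^ m) ^ i)"
    by (simp add: power_mult_distrib power_mult[symmetric] mult.commute)
  finally show ?thesis .
qed

lemma coeff_pow_iter:
  fixes c :: "'k::field"
  assumes "c ^ q = c"
  shows "c ^ (q ^ n) = c"
proof (induction n)
  case 0 then show ?case by simp
next
  case (Suc n)
  have "c ^ (q ^ Suc n) = (c ^ (q ^ n)) ^ q" by (simp add: power_mult[symmetric] mult.commute)
  then show ?case using Suc assms by simp
qed

lemma poly_in_subfield:
  fixes f :: "'k::field poly"
  assumes pr: "CHAR('k) = p" "prime p"
    and coef: "\<forall>i. coeff f i \<in> finite_subfield (p ^ e)"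
    and x: "x \<in> finite_subfield ((p ^ e) ^ n)"
  shows "poly f x \<in> finite_subfield ((p ^ e) ^ n)"
proof -
  define m where "m = (p ^ e) ^ n"
  have m': "m = CHAR('k) ^ (e * n)" by (simp add: m_def pr power_mult)
  have prc: "prime CHAR('k)" using pr by simp
  have xm: "x ^ m = x" using x by (simp add: finite_subfield_def m_def)
  have cm: "coeff f i ^ m = coeff f i" for i
    using coef coeff_pow_iter[of "coeff f i" "p ^ e" n] by (simp add: finite_subfield_def m_def)
  have "poly f x ^ m = (\<Sum>i\<le>degree f. (coeff f i) ^ m * (x ^ m) ^ i)"
    by (rule frob_sum_poly[OF prc m'])
  also have "\<dots> = poly f x" by (simp add: cm xm poly_altdef)
  finally show ?thesis by (simp add: finite_subfield_def m_def)
qed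

lemma trace_in_Fp:
  fixes y :: "'k::field"
  assumes pr: "CHAR('k) = p" "prime p"
    and y: "y \<in> finite_subfield ((p ^ e) ^ n)"
  shows "abs_trace p e n y \<in> finite_subfield p"
proof -
  define N where "N = n * e"
  have prc: "prime CHAR('k)" using pr by simp
  have yN: "y ^ (p ^ N) = y" using y by (simp add: finite_subfield_def N_def power_mult mult.commute)
  have "(abs_trace p e n y) ^ p = (\<Sum>i<N. (y ^ (p ^ i)) ^ p)"
    unfolding abs_trace_def N_def by (rule freshmans_dream_sum) (use pr in auto)
  also have "\<dots> = (\<Sum>i<N. y ^ (p ^ Suc i))"
    by (simp add: power_mult[symmetric] mult.commute)
  also have "\<dots> = (\<Sum>i<N. y ^ (p ^ i))"
  proof -
    have "(\<Sum>i<Suc N. y ^ (p ^ i)) = y ^ (p ^ 0) + (\<Sum>i<N. y ^ (p ^ Suc i))"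
      by (rule sum.lessThan_Suc_shift)
    moreover have "(\<Sum>i<Suc N. y ^ (p ^ i)) = (\<Sum>i<N. y ^ (p ^ i)) + y ^ (p ^ N)"
      by simp
    ultimately show ?thesis using yN by simp
  qed
  finally show ?thesis by (simp add: finite_subfield_def abs_trace_def N_def)
qed

lemma Fp_add:
  fixes x y :: "'k::field"
  assumes pr: "CHAR('k) = p" "prime p" and "x \<in> finite_subfield p" "y \<in> finite_subfield p"
  shows "x + y \<in> finite_subfield p"
proof -
  have "(x + y) ^ p = x ^ p + y ^ p" by (rule freshmans_dream) (use pr in auto)
  then show ?thesis using assms by (simp add: finite_subfield_def)
qed

lemma char_bound:
  fixes \<psi> :: "'k::field \<Rightarrow> complex"
  assumes pr: "CHAR('k) = p" "prime p" and \<psi>: "nontriv_add_char p \<psi>" and x: "x \<in> finite_subfield p"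
  shows "cmod (\<psi> x) \<le> 1"
proof -
  have p0: "p > 0" using pr prime_gt_0_nat by blast
  have add: "\<psi> (a + b) = \<psi> a * \<psi> b" if "a \<in> finite_subfield p" "b \<in> finite_subfield p" for a b
    using \<psi> that unfolding nontriv_add_char_def by blast
  have z: "(0::'k) \<in> finite_subfield p" using p0 by (simp add: finite_subfield_def)
  have mem: "of_nat k * x \<in> finite_subfield p" for k
  proof (induction k)
    case 0 then show ?case using z by simp
  next
    case (Suc k)
    have "of_nat (Suc k) * x = of_nat k * x + x" by (simp add: algebra_simps)
    then show ?case using Fp_add[OF pr Suc x] by simp
  qed
  have pw: "\<psi> (of_nat k * x) = \<psi> 0 * \<psi> x ^ k" for k
  proof (induction k)
    case 0 then show ?case by simp
  next
    case (Suc k)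
    have "\<psi> (of_nat (Suc k) * x) = \<psi> (of_nat k * x + x)" by (simp add: algebra_simps)
    also have "\<dots> = \<psi> (of_nat k * x) * \<psi> x" using add[OF mem x] .
    finally show ?case using Suc by simp
  qed
  have ox: "of_nat p * x = (0::'k)" using pr by (metis of_nat_CHAR mult_zero_left)
  have p0x: "\<psi> 0 = \<psi> 0 * \<psi> x ^ p"
    using pw[of p] unfolding ox .
  have "\<psi> 0 = \<psi> 0 * \<psi> 0" using add[OF z z] by simp
  then have "\<psi> 0 = 0 \<or> \<psi> 0 = 1" by (metis mult_cancel_left1 mult.commute)
  then show ?thesis
  proof
    assume h: "\<psi> 0 = 0"
    have "\<psi> x = \<psi> x * \<psi> 0" using add[OF x z] by simp
    then show ?thesis using h by simp
  next
    assume h: "\<psi> 0 = 1"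
    then have "\<psi> x ^ p = 1" using p0x by simp
    then have "cmod (\<psi> x) ^ p = 1" by (metis norm_one norm_power)
    show ?thesis
    proof (rule ccontr)
      assume "\<not> cmod (\<psi> x) \<le> 1"
      then have "1 < cmod (\<psi> x) ^ p" using p0 by (intro one_less_power) auto
      then show False using \<open>cmod (\<psi> x) ^ p = 1\<close> by simp
    qed
  qed
qed

lemma card_subfield:
  assumes "m \<ge> 2"
  shows "card (finite_subfield m :: 'k::field set) \<le> m"
proof -
  define P :: "'k poly" where "P = monom 1 m + - [:0, 1:]"
  have degP: "degree P = m"
    unfolding P_def using assms by (subst degree_add_eq_left) (auto simp: degree_monom_eq)
  then have "P \<noteq> 0" using assms by auto
  moreover have "finite_subfield m = {x. poly P x = 0}"
    by (simp add: P_def finite_subfield_def poly_monom)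
  ultimately show ?thesis using card_poly_roots_bound[of P] degP by simp
qed

lemma exp_sum_bound:
  fixes f :: "'k::field poly" and \<psi> :: "'k \<Rightarrow> complex"
  assumes pr: "CHAR('k) = p" "prime p" and e: "e \<ge> 1" and n: "n \<ge> 1"
    and coef: "\<forall>i. coeff f i \<in> finite_subfield (p ^ e)"
    and \<psi>: "nontriv_add_char p \<psi>"
  shows "cmod (exp_sum p e f \<psi> n) \<le> real ((p ^ e) ^ n)"
proof -
  define F where "F = (finite_subfield ((p ^ e) ^ n) :: 'k set)"
  have p2: "p \<ge> 2" using pr prime_ge_2_nat by blast
  have "p ^ e \<ge> p" using e p2 by (simp add: self_le_power)
  then have "(p ^ e) ^ n \<ge> p ^ e" using n p2 by (simp add: self_le_power)
  then have m2: "(p ^ e) ^ n \<ge> 2" using \<open>p ^ e \<ge> p\<close> p2 by linarith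
  have "cmod (exp_sum p e f \<psi> n) \<le> (\<Sum>x\<in>F. cmod (\<psi> (abs_trace p e n (poly f x))))"
    unfolding exp_sum_def F_def by (rule norm_sum)
  also have "\<dots> \<le> (\<Sum>x\<in>F. 1)"
  proof (rule sum_mono)
    fix x assume "x \<in> F"
    then have "poly f x \<in> finite_subfield ((p ^ e) ^ n)" unfolding F_def by (rule poly_in_subfield[OF pr coef])
    then have "abs_trace p e n (poly f x) \<in> finite_subfield p" by (rule trace_in_Fp[OF pr])
    then show "cmod (\<psi> (abs_trace p e n (poly f x))) \<le> 1" by (rule char_bound[OF pr \<psi>])
  qed
  also have "\<dots> = real (card F)" by simp
  also have "\<dots> \<le> real ((p ^ e) ^ n)" using card_subfield[OF m2] unfolding F_def of_nat_le_iff .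
  finally show ?thesis .
qed


lemma ln_q_ge1: "(q::real) \<ge> 3 \<Longrightarrow> ln q \<ge> 1"
proof -
  assume q: "q \<ge> 3"
  have "exp 1 \<le> q" using exp_le q by linarith
  then have "ln (exp 1) \<le> ln q" using q by (subst ln_le_cancel_iff) auto
  then show ?thesis by simp
qed

lemma poly_bound_aux:
  fixes d :: real assumes d: "d \<ge> 2"
  shows "((ln d + 66) * sqrt d + 1) * ln d \<le> 284 * d"
proof -
  define s where "s = sqrt (sqrt d)"
  have s1: "s \<ge> 1" unfolding s_def using d by simp
  have s2: "s^2 = sqrt d" unfolding s_def using d by simp
  have s4: "s^4 = d"
  proof -
    have "s^4 = (s^2)^2" by (simp flip: power_mult)
    also have "\<dots> = d" using s2 d by simp
    finally show ?thesis .
  qed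
  have lns: "ln d = 4 * ln s"
  proof -
    have "ln d = ln (s^4)" using s4 by simp
    also have "\<dots> = 4 * ln s" using s1 by (simp add: ln_realpow)
    finally show ?thesis .
  qed
  have "ln s \<le> s - 1" using s1 by (intro ln_le_minus_one) simp
  then have ld: "ln d \<le> 4 * s" using lns by simp
  have ld0: "0 \<le> ln d" using d by simp
  have "((ln d + 66) * sqrt d + 1) * ln d \<le> ((4 * s + 66) * s^2 + 1) * (4 * s)"
  proof -
    have "(ln d + 66) * sqrt d \<le> (4 * s + 66) * s^2" unfolding s2[symmetric]
      using ld by (intro mult_right_mono) auto
    then have "(ln d + 66) * sqrt d + 1 \<le> (4 * s + 66) * s^2 + 1" by simp
    moreover have "0 \<le> (ln d + 66) * sqrt d + 1" using ld0 d by simp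
    ultimately show ?thesis using ld ld0 by (intro mult_mono) auto
  qed
  also have "\<dots> = 16 * s^4 + 264 * s^3 + 4 * s" by (simp add: algebra_simps eval_nat_numeral)
  also have "\<dots> \<le> 16 * s^4 + 264 * s^4 + 4 * s^4"
  proof -
    have "s^3 \<le> s^4" using s1 by (intro power_increasing) auto
    moreover have "s \<le> s^4" using s1 by (metis power_increasing power_one_right one_le_numeral zero_le_one order.trans)
    ultimately show ?thesis by simp
  qed
  also have "\<dots> = 284 * d" using s4 by simp
  finally show ?thesis .
qed

lemma asym:
  fixes q :: real and d :: nat and X :: real
  assumes q: "q \<ge> 3" and d: "d \<ge> 2" and Xd: "X \<le> real d"
    and XK: "\<And>K::nat. K \<ge> 1 \<Longrightarrow> X \<le> 32 * real d / (real K + 1) + (2 * real K + 66) * q ^ K + 1"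
  shows "X \<le> (66 * ln q + 284) * (real d / ln (real d))"
proof -
  define ld where "ld = ln (real d)"
  define lq where "lq = ln q"
  have lq1: "lq \<ge> 1" unfolding lq_def using ln_q_ge1 q by simp
  have ld0: "ld > 0" unfolding ld_def using d by simp
  have dd: "real d / ld > 0" using ld0 d by simp
  define K where "K = nat \<lfloor>ld / (2 * lq)\<rfloor>"
  have q0: "q > 0" using q by simp
  show ?thesis
  proof (cases "K = 0")
    case True
    then have "ld / (2 * lq) < 1" unfolding K_def by linarith
    then have "ld < 2 * lq" using lq1 by (simp add: field_simps)
    have "X \<le> real d" by (rule Xd)
    also have "\<dots> = (real d / ld) * ld" using ld0 by simp
    also have "\<dots> \<le> (real d / ld) * (66 * lq + 284)"
      using \<open>ld < 2 * lq\<close> lq1 dd by (intro mult_left_mono) auto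
    finally show ?thesis by (simp add: ld_def lq_def mult.commute)
  next
    case False
    then have K1: "K \<ge> 1" by simp
    have fl0: "0 \<le> \<lfloor>ld / (2 * lq)\<rfloor>" using ld0 lq1 by simp
    have Kle: "real K \<le> ld / (2 * lq)" unfolding K_def using fl0 by simp
    have Kgt: "real K + 1 > ld / (2 * lq)" unfolding K_def using ld0 lq1 by linarith
    have qK: "q ^ K \<le> sqrt (real d)"
    proof -
      have "q ^ K = exp (real K * lq)" unfolding lq_def using q0 by (simp add: exp_of_nat_mult)
      also have "\<dots> \<le> exp (ld / 2)"
      proof -
        have "real K * lq \<le> ld / (2 * lq) * lq" using Kle lq1 by (intro mult_right_mono) auto
        also have "\<dots> = ld / 2" using lq1 by simp
        finally show ?thesis by simp
      qed
      also have "\<dots> = sqrt (real d)"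
      proof -
        have "sqrt (real d) = real d powr (1/2)" using d by (simp add: powr_half_sqrt)
        also have "\<dots> = exp (ld / 2)" unfolding ld_def powr_def using d by simp
        finally show ?thesis by simp
      qed
      finally show ?thesis .
    qed
    have t1: "32 * real d / (real K + 1) \<le> 64 * lq * (real d / ld)"
    proof -
      have "32 * real d / (real K + 1) \<le> 32 * real d / (ld / (2 * lq))"
        using Kgt ld0 lq1 d by (intro divide_left_mono) auto
      also have "\<dots> = 64 * lq * (real d / ld)" using ld0 lq1 by (simp add: field_simps)
      finally show ?thesis .
    qed
    have t2: "(2 * real K + 66) * q ^ K + 1 \<le> (ld + 66) * sqrt (real d) + 1"
    proof -
      have "2 * real K \<le> ld / lq" using Kle lq1 by (simp add: field_simps)
      also have "\<dots> \<le> ld" using ld0 lq1 by (simp add: divide_le_eq)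
      finally have "2 * real K + 66 \<le> ld + 66" by simp
      then show ?thesis using qK q0 by (intro add_mono mult_mono) auto
    qed
    have t3: "(ld + 66) * sqrt (real d) + 1 \<le> 284 * (real d / ld)"
    proof -
      have "((ld + 66) * sqrt (real d) + 1) * ld \<le> 284 * real d"
        unfolding ld_def using poly_bound_aux d by simp
      then show ?thesis using ld0 by (simp add: field_simps)
    qed
    have "X \<le> 32 * real d / (real K + 1) + (2 * real K + 66) * q ^ K + 1" using XK[OF K1] .
    also have "\<dots> \<le> 64 * lq * (real d / ld) + 284 * (real d / ld)" using t1 t2 t3 by linarith
    also have "\<dots> \<le> (66 * lq + 284) * (real d / ld)"
    proof -
      obtain Y where Y: "Y = real d / ld" by blast
      have "0 < Y" using dd Y by simp
      then have h: "0 \<le> lq * Y" using lq1 by simp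
      have "64 * lq * Y + 284 * Y \<le> (66 * lq + 284) * Y" using h by (simp add: ring_distribs mult.commute)
      then show ?thesis using Y by simp
    qed
    finally show ?thesis by (simp add: ld_def lq_def)
  qed
qed


lemma c_pow:
  "(complex_of_real s * exp (2 * pi * \<i> * complex_of_real t)) ^ n = complex_of_real (s ^ n) * ee (real n * t)"
proof -
  have "exp (2 * pi * \<i> * complex_of_real t) ^ n = exp (of_nat n * (2 * pi * \<i> * complex_of_real t))"
    by (rule exp_of_nat_mult[symmetric])
  also have "\<dots> = ee (real n * t)"
    unfolding ee_def cis_conv_exp by (simp add: algebra_simps)
  finally show ?thesis by (simp add: power_mult_distrib)
qed

lemma interval_length_bounds:
  assumes "I \<subseteq> {-1/2..<1/2}"
  shows "0 \<le> interval_length I" "interval_length I \<le> 1"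
proof -
  have "0 \<le> interval_length I \<and> interval_length I \<le> 1"
  proof (cases "I = {}")
    case True then show ?thesis by (simp add: interval_length_def)
  next
    case False
    have bddb: "bdd_below I" using assms unfolding bdd_below_def by (auto intro!: exI[of _ "-1/2"])
    have bdda: "bdd_above I" using assms unfolding bdd_above_def by (auto intro!: exI[of _ "1/2"])
    obtain x where x: "x \<in> I" using False by blast
    have "Inf I \<le> x" using bddb x by (simp add: cInf_lower)
    moreover have "x \<le> Sup I" using bdda x by (simp add: cSup_upper)
    moreover have "-1/2 \<le> Inf I" using False assms by (intro cInf_greatest) auto
    moreover have "Sup I \<le> 1/2" using False assms by (intro cSup_least) auto
    ultimately show ?thesis using False by (simp add: interval_length_def)
  qed
  then show "0 \<le> interval_length I" "interval_length I \<le> 1" by auto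
qed

theorem theorem4p2:
  fixes p e :: nat
  assumes "prime p" and "odd p" and "e \<ge> 1"
    and "CHAR('k::field) = p" and "alg_closed_field TYPE('k)"
  shows "\<exists>C::real. \<forall>(f :: 'k poly) (\<psi> :: 'k \<Rightarrow> complex) (\<theta> :: nat \<Rightarrow> real) (I :: real set).
     (\<forall>i. coeff f i \<in> finite_subfield (p ^ e)) \<longrightarrow>
     \<not> p dvd degree f \<longrightarrow>
     nontriv_add_char p \<psi> \<longrightarrow>
     (\<forall>j\<in>{1..degree f - 1}. \<theta> j \<in> {-1/2..<1/2}) \<longrightarrow>
     L_fps p e f \<psi> = (\<Prod>j\<in>{1..degree f - 1}.
        1 - fps_const (complex_of_real (sqrt (real (p ^ e))) * exp (2 * pi * \<i> * complex_of_real (\<theta> j))) * fps_X) \<longrightarrow>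
     real_interval I \<longrightarrow> I \<subseteq> {-1/2..<1/2} \<longrightarrow>
     \<bar>real (card {j\<in>{1..degree f - 1}. \<theta> j \<in> I}) - (real (degree f) - 1) * interval_length I\<bar>
       \<le> C * (real (degree f) / ln (real (degree f)))"
proof -
  note pr = assms(1) and podd = assms(2) and e1 = assms(3) and ch = assms(4)
  define q where "q = real (p ^ e)"
  have p2: "p \<ge> 2" using pr prime_ge_2_nat by blast
  have p3: "p \<ge> 3" using p2 podd by (cases "p = 2") auto
  have "p ^ e \<ge> p" using e1 p2 by (simp add: self_le_power)
  then have q3: "q \<ge> 3" using p3 unfolding q_def by linarith
  show ?thesis
  proof (intro exI[of _ "66 * ln q + 284"] allI impI)
    fix f :: "'k poly" and \<psi> :: "'k \<Rightarrow> complex" and \<theta> :: "nat \<Rightarrow> real" and I :: "real set"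
    assume coef: "\<forall>i. coeff f i \<in> finite_subfield (p ^ e)"
      and ndvd: "\<not> p dvd degree f"
      and chr: "nontriv_add_char p \<psi>"
      and \<theta>r: "\<forall>j\<in>{1..degree f - 1}. \<theta> j \<in> {-1/2..<1/2}"
      and Lh: "L_fps p e f \<psi> = (\<Prod>j\<in>{1..degree f - 1}.
        1 - fps_const (complex_of_real (sqrt (real (p ^ e))) * exp (2 * pi * \<i> * complex_of_real (\<theta> j))) * fps_X)"
      and Iint: "real_interval I" and Isub: "I \<subseteq> {-1/2..<1/2}"
    define d where "d = degree f"
    define J where "J = {1..d - 1}"
    have d0: "d \<noteq> 0" using ndvd unfolding d_def by (metis dvd_0_right)
    show "\<bar>real (card {j\<in>{1..degree f - 1}. \<theta> j \<in> I}) - (real (degree f) - 1) * interval_length I\<bar>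
       \<le> (66 * ln q + 284) * (real (degree f) / ln (real (degree f)))"
    proof (cases "d = 1")
      case True
      then show ?thesis by (simp add: d_def[symmetric])
    next
      case False
      then have d2: "d \<ge> 2" using d0 by simp
      have finJ: "finite J" by (simp add: J_def)
      have cardJ: "real (card J) = real d - 1" using d2 by (simp add: J_def of_nat_diff)
      define c where "c j = complex_of_real (sqrt (real (p ^ e))) * exp (2 * pi * \<i> * complex_of_real (\<theta> j))" for j
      define s where "s = sqrt q"
      have s1: "s \<ge> 1" using q3 by (simp add: s_def)
      have sq: "s^2 = q" using q3 by (simp add: s_def)
      have Sn: "exp_sum p e f \<psi> n = - (\<Sum>j\<in>J. c j ^ n)" if "n \<ge> 1" for n
      proof (rule fps_log_prod[OF finJ _ that])
        show "fps_exp 1 oo Abs_fps (\<lambda>n. if n = 0 then 0 else exp_sum p e f \<psi> n / of_nat n) =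
              (\<Prod>j\<in>J. 1 - fps_const (c j) * fps_X)"
          using Lh unfolding L_fps_def J_def d_def c_def .
      qed
      have PQ: "\<forall>k::int. 1 \<le> k \<and> k \<le> 2 * int K \<longrightarrow> cmod (\<Sum>j\<in>J. ee (of_int k * \<theta> j)) \<le> q ^ K" for K
      proof (intro allI impI)
        fix k :: int assume k: "1 \<le> k \<and> k \<le> 2 * int K"
        define n where "n = nat k"
        have n1: "n \<ge> 1" and kn: "of_int k = real n" and n2K: "n \<le> 2 * K" using k by (auto simp: n_def)
        have cpow: "c j ^ n = complex_of_real (s ^ n) * ee (real n * \<theta> j)" for j
          unfolding c_def s_def q_def by (rule c_pow)
        have "(\<Sum>j\<in>J. c j ^ n) = complex_of_real (s ^ n) * (\<Sum>j\<in>J. ee (real n * \<theta> j))"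
          by (simp add: cpow sum_distrib_left)
        then have "cmod (exp_sum p e f \<psi> n) = s ^ n * cmod (\<Sum>j\<in>J. ee (real n * \<theta> j))"
          using Sn[OF n1] s1 by (simp add: norm_mult norm_power)
        moreover have "cmod (exp_sum p e f \<psi> n) \<le> real ((p ^ e) ^ n)"
          by (rule exp_sum_bound[OF ch pr e1 n1 coef chr])
        moreover have "real ((p ^ e) ^ n) = s ^ n * s ^ n"
          using sq by (simp add: q_def power_mult_distrib[symmetric] power2_eq_square)
        ultimately have "s ^ n * cmod (\<Sum>j\<in>J. ee (real n * \<theta> j)) \<le> s ^ n * s ^ n" by simp
        then have "cmod (\<Sum>j\<in>J. ee (real n * \<theta> j)) \<le> s ^ n" using s1 by simp
        also have "\<dots> \<le> s ^ (2 * K)" using s1 n2K by (intro power_increasing) auto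
        also have "\<dots> = q ^ K" using sq by (simp add: power_mult)
        finally show "cmod (\<Sum>j\<in>J. ee (of_int k * \<theta> j)) \<le> q ^ K" using kn by simp
      qed
      have \<theta>J: "\<forall>j\<in>J. \<theta> j \<in> {-1/2..<1/2}" using \<theta>r by (simp add: J_def d_def)
      define X where "X = \<bar>real (card {j\<in>J. \<theta> j \<in> I}) - real (card J) * interval_length I\<bar>"
      have q0: "0 \<le> q" using q3 by simp
      have XK: "X \<le> 32 * real d / (real K + 1) + (2 * real K + 66) * q ^ K + 1" if K: "K \<ge> 1" for K
      proof -
        have "X \<le> 32 * real (card J) / (real K + 1) + (2 * real K + 66) * q ^ K + 1"
          unfolding X_def by (rule discrepancy[OF finJ \<theta>J K _ PQ Iint Isub]) (use q0 in simp)
        moreover have "32 * real (card J) / (real K + 1) \<le> 32 * real d / (real K + 1)"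
          using cardJ by (intro divide_right_mono) auto
        ultimately show ?thesis by linarith
      qed
      have Xd: "X \<le> real d"
      proof -
        have cb: "card {j\<in>J. \<theta> j \<in> I} \<le> card J" using finJ by (intro card_mono) auto
        have l0: "0 \<le> interval_length I" and l1: "interval_length I \<le> 1"
          using interval_length_bounds[OF Isub] by auto
        have "0 \<le> real (card J) * interval_length I" using l0 by simp
        moreover have "real (card J) * interval_length I \<le> real (card J)"
          using l1 by (simp add: mult_left_le)
        ultimately have "X \<le> real (card J)" using cb unfolding X_def by linarith
        then show ?thesis using cardJ by linarith
      qed
      have "X \<le> (66 * ln q + 284) * (real d / ln (real d))"
        by (rule asym[OF q3 d2 Xd XK])
      then show ?thesis using cardJ unfolding X_def J_def d_def by simp
    qed
  qed
qed

end
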